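(* Let $\Gamma=(\rho_0,\dots,\rho_{n-1})$ be a context with every $\rho_k\in\mathrm{Type}^+\cup\mathrm{Type}^-$, let $\Gamma\vdash r:\rho$ be a typed term, $C=(i_0,\dots,i_{n-1})$ with $i_k\in I_{\rho_k}$, and $i\le i'$ in $I_\rho$ such that both state judgements $C\vdash r:i$ and $C\vdash r:i'$ are derivable. Then $\llbracket r\rrbracket^{i'}_{\vec a:C}\triangleright\llbracket r\rrbracket^{i}_{\vec a:C}$ for every $\vec a\in\llbracket\Gamma\rrbracket_C$.
   Context: Systems and factor systems: for a non-empty directed preordered set $I$, a system consists of pairwise disjoint sets $M_i$ ($i\in I$) and relations $\triangleright\subseteq M_{i'}\times M_i$ ($i\le i'$), reflexive for $i=i'$; $a_i\approx b_j$ iff some $c\in M_{i'}$, $i'\ge i,j$, has $c\triangleright a_i,c\triangleright b_j$; prefactor system: $a_{i'}\approx a_i\iff a_{i'}\triangleright a_i$. A factor system is a prefactor system with $\approx$-preserving $emb_{i,i'}:M_i\to M_{i'}$, $proj_{i',i}:M_{i'}\to M_i$ with $emb_{i,i}(a)\approx a$, $proj_{i,i}(a)\approx a$, $emb_{i',i''}\circ emb_{i,i'}(a)\approx emb_{i,i''}(a)$, $proj_{i',i}\circ proj_{i'',i'}(a)\approx proj_{i'',i}(a)$, $proj_{i',i}(emb_{i,i'}(a))\approx a$, and $a_{i'}\triangleright a_i\Rightarrow emb_{i',i''}(a_{i'})\triangleright a_i$, $a_{i''}\triangleright a_i\Rightarrow proj_{i'',i'}(a_{i''})\triangleright a_i$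 ($i\le i'\le i''$); it is direct iff $a_{i'}\triangleright a_i\iff a_{i'}\approx emb_{i,i'}(a_i)$. Filters: for each such $I$ a family $\mathcal F(I)$ of cofinal subsets, closed under supersets and finite intersections, containing all non-empty up-sets; standing Condition (D): $H\in\mathcal F(I\times J)$, $I'\in\mathcal F(I)$ imply $\{j\mid\exists i\in I',(i,j)\in H\}\in\mathcal F(J)$. A target for $M_I$: a set $M$ with relation $a\triangleright a_i$ with $\{i\mid\exists a_i,a\triangleright a_i\}\in\mathcal F(I)$ and $a\triangleright a_{i'},a\triangleright a_i\Rightarrow a_{i'}\triangleright a_i$; a limit is a target $M$ such that every target $N$ admits a unique $\Phi:N\to M$ with $b\triangleright a_i\Rightarrow\Phi(b)\triangleright a_i$. Function space $[M_I\to N_J]$: indices $i\to j\in I\times J$, states = $\approx$-preserving functions $M_i\to N_j$, $f'\triangleright f$ iff $a_{i'}\triangleright a_i\Rightarrow f'(a_{i'})\triangleright f(a_i)$, embeddings $f\mapsto emb_{j,j'}\circ f\circ proj_{i',i}$, projections $f'\mapsto proj_{j',j}\circ f'\circ emb_{i,i'}$. For targets: $[M\to_{\mathcal F}N]=\{f:M\to N\mid I_f\in\mathcal F(I\times J)\}$, $f\triangleright f_{i\to j}$ iff $a\triangleright a_i\Rightarrow f(a)\triangleright f_{i\to j}(a_i)$, $I_f=\{i\to j\mid\exists f_{i\to j},f\triangleright f_{i\to j}\}$. Types $\rho::=\iota\mid\rho\to\rho$ over base types including $\mathsf{prop}$; $\mathrm{Type}^+\ni\rho^+::=\iota\mid\rho^-\to\rho^+$,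 $\mathrm{Type}^-\ni\rho^-::=\mathsf{prop}\mid\rho^+\to\rho^-$. Index sets: non-empty directed $I_\rho$, $I_{\mathsf{prop}}=\{\mathsf{prop}\}$, $I_{\rho\to\sigma}=I_\rho\times I_\sigma$ (elements written $i\to j$). Interpretation of types: each $\rho$ gets a factor system $(\llbracket\rho\rrbracket_i)_{i\in I_\rho}$ and a limit $\llbracket\rho\rrbracket$; base types get direct factor systems; $\mathsf{prop}$ gets the one-index system with state $\{true,false\}$ and limit $\{true,false\}$, all relations being equality; $\rho\to\sigma$ gets the function space $[(\llbracket\rho\rrbracket_i)\to(\llbracket\sigma\rrbracket_j)]$ with limit $[\llbracket\rho\rrbracket\to_{\mathcal F}\llbracket\sigma\rrbracket]$. For $\Gamma=(\rho_0,\dots,\rho_{n-1})$ and $C=(i_0,\dots,i_{n-1})$: $\llbracket\Gamma\rrbracket_C=\prod_k\llbracket\rho_k\rrbracket_{i_k}$. Terms (variables $x_0,x_1,\dots$): $r::=x_k\mid rr\mid\lambda x_k^\rho r$. Typing: $\Gamma\vdash x_k:\rho_k$ ($k<n$); from $\Gamma\vdash r:\rho\to\sigma$, $\Gamma\vdash s:\rho$ infer $\Gamma\vdash rs:\sigma$; from $\Gamma.\rho\vdash r:\sigma$ (context extended by $\rho$ as $x_n$) infer $\Gamma\vdash\lambda x_n^\rho r:\rho\to\sigma$. State judgements: $C\vdash x_k:j$ if $\rho_k\in\mathrm{Type}^+$ and $j\ge i_k$, or if $\rho_k\in\mathrm{Type}^-$ and $j\le i_k$; from $C\vdash r:i\to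 j$ and $C\vdash s:i$ infer $C\vdash rs:j$; from $C.i\vdash r:j$ infer $C\vdash\lambda x_n^\rho r:i\to j$. State values, defined along the derivation of $C\vdash r:i$ for $\vec a\in\llbracket\Gamma\rrbracket_C$: $\llbracket x_k\rrbracket^j_{\vec a:C}=emb_{i_k,j}(a_k)$ if $\rho_k\in\mathrm{Type}^+$, $=proj_{i_k,j}(a_k)$ if $\rho_k\in\mathrm{Type}^-$; $\llbracket rs\rrbracket^j_{\vec a:C}=\llbracket r\rrbracket^{i\to j}_{\vec a:C}(\llbracket s\rrbracket^i_{\vec a:C})$; $\llbracket\lambda x_n^\rho r\rrbracket^{i\to j}_{\vec a:C}(b)=\llbracket r\rrbracket^j_{\vec a.b:C.i}$ for $b\in\llbracket\rho\rrbracket_i$. *)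

theory Defs
  imports "HOL-Library.FuncSet"
begin

text \<open>States M i are indexed
explicitly by their index, so pairwise disjointness of the M i is implicit.
The relation tri i' i a' a stands for a'_{i'} |> a_i (only meaningful for i <= i').\<close>

definition directed_preorder :: "'i set \<Rightarrow> ('i \<Rightarrow> 'i \<Rightarrow> bool) \<Rightarrow> bool" where
  "directed_preorder I le \<longleftrightarrow> I \<noteq> {} \<and> (\<forall>i\<in>I. le i i)
     \<and> (\<forall>i\<in>I. \<forall>j\<in>I. \<forall>k\<in>I. le i j \<longrightarrow> le j k \<longrightarrow> le i k)
     \<and> (\<forall>i\<in>I. \<forall>j\<in>I. \<exists>k\<in>I. le i k \<and> le j k)"

definition is_system :: "'i set \<Rightarrow> ('i \<Rightarrow> 'i \<Rightarrow> bool) \<Rightarrow> ('i \<Rightarrow> 'a set)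
    \<Rightarrow> ('i \<Rightarrow> 'i \<Rightarrow> 'a \<Rightarrow> 'a \<Rightarrow> bool) \<Rightarrow> bool" where
  "is_system I le M tri \<longleftrightarrow> directed_preorder I le
     \<and> (\<forall>i' i a' a. tri i' i a' a \<longrightarrow> i \<in> I \<and> i' \<in> I \<and> le i i' \<and> a' \<in> M i' \<and> a \<in> M i)
     \<and> (\<forall>i\<in>I. \<forall>a\<in>M i. tri i i a a)"

definition sys_sim :: "'i set \<Rightarrow> ('i \<Rightarrow> 'i \<Rightarrow> bool) \<Rightarrow> ('i \<Rightarrow> 'a set)
    \<Rightarrow> ('i \<Rightarrow> 'i \<Rightarrow> 'a \<Rightarrow> 'a \<Rightarrow> bool) \<Rightarrow> 'i \<Rightarrow> 'a \<Rightarrow> 'i \<Rightarrow> 'a \<Rightarrow> bool" where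
  "sys_sim I le M tri i a j b \<longleftrightarrow>
     (\<exists>k\<in>I. le i k \<and> le j k \<and> (\<exists>c\<in>M k. tri k i c a \<and> tri k j c b))"

definition is_prefactor_system :: "'i set \<Rightarrow> ('i \<Rightarrow> 'i \<Rightarrow> bool) \<Rightarrow> ('i \<Rightarrow> 'a set)
    \<Rightarrow> ('i \<Rightarrow> 'i \<Rightarrow> 'a \<Rightarrow> 'a \<Rightarrow> bool) \<Rightarrow> bool" where
  "is_prefactor_system I le M tri \<longleftrightarrow> is_system I le M tri
     \<and> (\<forall>i\<in>I. \<forall>i'\<in>I. le i i' \<longrightarrow> (\<forall>a'\<in>M i'. \<forall>a\<in>M i.
           sys_sim I le M tri i' a' i a \<longleftrightarrow> tri i' i a' a))"

definition is_factor_system :: "'i set \<Rightarrow> ('i \<Rightarrow> 'i \<Rightarrow> bool) \<Rightarrow> ('i \<Rightarrow> 'a set)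
    \<Rightarrow> ('i \<Rightarrow> 'i \<Rightarrow> 'a \<Rightarrow> 'a \<Rightarrow> bool)
    \<Rightarrow> ('i \<Rightarrow> 'i \<Rightarrow> 'a \<Rightarrow> 'a) \<Rightarrow> ('i \<Rightarrow> 'i \<Rightarrow> 'a \<Rightarrow> 'a) \<Rightarrow> bool" where
  "is_factor_system I le M tri emb proj \<longleftrightarrow> is_prefactor_system I le M tri
     \<and> (\<forall>i\<in>I. \<forall>i'\<in>I. le i i' \<longrightarrow>
          (\<forall>a\<in>M i. emb i i' a \<in> M i') \<and> (\<forall>a\<in>M i'. proj i' i a \<in> M i)
        \<and> (\<forall>a\<in>M i. \<forall>b\<in>M i. sys_sim I le M tri i a i b
              \<longrightarrow> sys_sim I le M tri i' (emb i i' a) i' (emb i i' b))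
        \<and> (\<forall>a\<in>M i'. \<forall>b\<in>M i'. sys_sim I le M tri i' a i' b
              \<longrightarrow> sys_sim I le M tri i (proj i' i a) i (proj i' i b))
        \<and> (\<forall>a\<in>M i. sys_sim I le M tri i (proj i' i (emb i i' a)) i a))
     \<and> (\<forall>i\<in>I. \<forall>a\<in>M i. sys_sim I le M tri i (emb i i a) i a
                        \<and> sys_sim I le M tri i (proj i i a) i a)
     \<and> (\<forall>i\<in>I. \<forall>i'\<in>I. \<forall>i''\<in>I. le i i' \<longrightarrow> le i' i'' \<longrightarrow>
          (\<forall>a\<in>M i. sys_sim I le M tri i'' (emb i' i'' (emb i i' a)) i'' (emb i i'' a))
        \<and> (\<forall>a\<in>M i''. sys_sim I le M tri i (proj i' i (proj i'' i' a)) i (proj i'' i a))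
        \<and> (\<forall>a'\<in>M i'. \<forall>a\<in>M i. tri i' i a' a \<longrightarrow> tri i'' i (emb i' i'' a') a)
        \<and> (\<forall>a''\<in>M i''. \<forall>a\<in>M i. tri i'' i a'' a \<longrightarrow> tri i' i (proj i'' i' a'') a))"

definition is_direct_factor_system :: "'i set \<Rightarrow> ('i \<Rightarrow> 'i \<Rightarrow> bool) \<Rightarrow> ('i \<Rightarrow> 'a set)
    \<Rightarrow> ('i \<Rightarrow> 'i \<Rightarrow> 'a \<Rightarrow> 'a \<Rightarrow> bool)
    \<Rightarrow> ('i \<Rightarrow> 'i \<Rightarrow> 'a \<Rightarrow> 'a) \<Rightarrow> ('i \<Rightarrow> 'i \<Rightarrow> 'a \<Rightarrow> 'a) \<Rightarrow> bool" where
  "is_direct_factor_system I le M tri emb proj \<longleftrightarrow> is_factor_system I le M tri emb proj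
     \<and> (\<forall>i\<in>I. \<forall>i'\<in>I. le i i' \<longrightarrow> (\<forall>a'\<in>M i'. \<forall>a\<in>M i.
           tri i' i a' a \<longleftrightarrow> sys_sim I le M tri i' a' i' (emb i i' a)))"

datatype 'bt ty = Prop | Base 'bt | Arr "'bt ty" "'bt ty"

fun pos :: "'bt ty \<Rightarrow> bool" and neg :: "'bt ty \<Rightarrow> bool" where
  "pos Prop = True"
| "pos (Base b) = True"
| "pos (Arr r s) = (neg r \<and> pos s)"
| "neg Prop = True"
| "neg (Base b) = False"
| "neg (Arr r s) = (pos r \<and> neg s)"

datatype 'ix idx = IProp | IB 'ix | IArr "'ix idx" "'ix idx"

datatype 'bt trm = Var nat | App "'bt trm" "'bt trm" | Lam nat "'bt ty" "'bt trm"

inductive typed :: "'bt ty list \<Rightarrow> 'bt trm \<Rightarrow> 'bt ty \<Rightarrow> bool" where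
  tVar: "k < length \<Gamma> \<Longrightarrow> typed \<Gamma> (Var k) (\<Gamma> ! k)"
| tApp: "typed \<Gamma> r (Arr \<rho> \<sigma>) \<Longrightarrow> typed \<Gamma> s \<rho> \<Longrightarrow> typed \<Gamma> (App r s) \<sigma>"
| tLam: "typed (\<Gamma> @ [\<rho>]) r \<sigma> \<Longrightarrow> typed \<Gamma> (Lam (length \<Gamma>) \<rho> r) (Arr \<rho> \<sigma>)"

text \<open>All states live in one universe type 'v.  A model fixes the base data (index sets,
direct factor systems), the two truth values, an application operator ap and the
state sets St; the state sets of function types are required to represent (via ap)
exactly the approx-preserving functions (see model_ok).\<close>

record ('bt, 'ix, 'v) model =
  BI :: "'bt \<Rightarrow> 'ix set"
  Ble :: "'bt \<Rightarrow> 'ix \<Rightarrow> 'ix \<Rightarrow> bool"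
  BSt :: "'bt \<Rightarrow> 'ix \<Rightarrow> 'v set"
  Btri :: "'bt \<Rightarrow> 'ix \<Rightarrow> 'ix \<Rightarrow> 'v \<Rightarrow> 'v \<Rightarrow> bool"
  Bemb :: "'bt \<Rightarrow> 'ix \<Rightarrow> 'ix \<Rightarrow> 'v \<Rightarrow> 'v"
  Bproj :: "'bt \<Rightarrow> 'ix \<Rightarrow> 'ix \<Rightarrow> 'v \<Rightarrow> 'v"
  vtrue :: 'v
  vfalse :: 'v
  ap :: "'v \<Rightarrow> 'v \<Rightarrow> 'v"
  St :: "'bt ty \<Rightarrow> 'ix idx \<Rightarrow> 'v set"

fun Idx :: "('bt, 'ix, 'v) model \<Rightarrow> 'bt ty \<Rightarrow> 'ix idx set" where
  "Idx M Prop = {IProp}"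
| "Idx M (Base b) = IB ` BI M b"
| "Idx M (Arr r s) = {IArr i j | i j. i \<in> Idx M r \<and> j \<in> Idx M s}"

fun le :: "('bt, 'ix, 'v) model \<Rightarrow> 'bt ty \<Rightarrow> 'ix idx \<Rightarrow> 'ix idx \<Rightarrow> bool" where
  "le M Prop IProp IProp = True"
| "le M (Base b) (IB x) (IB y) = Ble M b x y"
| "le M (Arr r s) (IArr i j) (IArr i' j') = (le M r i i' \<and> le M s j j')"
| "le M _ _ _ = False"

text \<open>tri M rho i' i a' a : a' (a state at index i') |> a (a state at index i).\<close>
fun tri :: "('bt, 'ix, 'v) model \<Rightarrow> 'bt ty \<Rightarrow> 'ix idx \<Rightarrow> 'ix idx \<Rightarrow> 'v \<Rightarrow> 'v \<Rightarrow> bool" where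
  "tri M Prop IProp IProp a' a = (a' = a)"
| "tri M (Base b) (IB x') (IB x) a' a = Btri M b x' x a' a"
| "tri M (Arr r s) (IArr i' j') (IArr i j) f' f =
     (\<forall>a'\<in>St M r i'. \<forall>a\<in>St M r i. tri M r i' i a' a \<longrightarrow> tri M s j' j (ap M f' a') (ap M f a))"
| "tri M _ _ _ _ _ = False"

definition sim :: "('bt, 'ix, 'v) model \<Rightarrow> 'bt ty \<Rightarrow> 'ix idx \<Rightarrow> 'v \<Rightarrow> 'ix idx \<Rightarrow> 'v \<Rightarrow> bool" where
  "sim M \<rho> i a j b \<longleftrightarrow> (\<exists>k\<in>Idx M \<rho>. le M \<rho> i k \<and> le M \<rho> j k
       \<and> (\<exists>c\<in>St M \<rho> k. tri M \<rho> k i c a \<and> tri M \<rho> k j c b))"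

fun emb :: "('bt, 'ix, 'v) model \<Rightarrow> 'bt ty \<Rightarrow> 'ix idx \<Rightarrow> 'ix idx \<Rightarrow> 'v \<Rightarrow> 'v"
and proj :: "('bt, 'ix, 'v) model \<Rightarrow> 'bt ty \<Rightarrow> 'ix idx \<Rightarrow> 'ix idx \<Rightarrow> 'v \<Rightarrow> 'v" where
  "emb M Prop i i' a = a"
| "emb M (Base b) (IB x) (IB x') a = Bemb M b x x' a"
| "emb M (Arr r s) (IArr i j) (IArr i' j') f =
     (THE f'. f' \<in> St M (Arr r s) (IArr i' j')
        \<and> (\<forall>x\<in>St M r i'. ap M f' x = emb M s j j' (ap M f (proj M r i' i x))))"
| "emb M (Base b) IProp _ a = a"
| "emb M (Base b) (IArr _ _) _ a = a"
| "emb M (Base b) (IB _) IProp a = a"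
| "emb M (Base b) (IB _) (IArr _ _) a = a"
| "emb M (Arr r s) IProp _ a = a"
| "emb M (Arr r s) (IB _) _ a = a"
| "emb M (Arr r s) (IArr _ _) IProp a = a"
| "emb M (Arr r s) (IArr _ _) (IB _) a = a"
| "proj M Prop i' i a = a"
| "proj M (Base b) (IB x') (IB x) a = Bproj M b x' x a"
| "proj M (Arr r s) (IArr i' j') (IArr i j) f' =
     (THE f. f \<in> St M (Arr r s) (IArr i j)
        \<and> (\<forall>x\<in>St M r i. ap M f x = proj M s j' j (ap M f' (emb M r i i' x))))"
| "proj M (Base b) IProp _ a = a"
| "proj M (Base b) (IArr _ _) _ a = a"
| "proj M (Base b) (IB _) IProp a = a"
| "proj M (Base b) (IB _) (IArr _ _) a = a"
| "proj M (Arr r s) IProp _ a = a"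
| "proj M (Arr r s) (IB _) _ a = a"
| "proj M (Arr r s) (IArr _ _) IProp a = a"
| "proj M (Arr r s) (IArr _ _) (IB _) a = a"

definition model_ok :: "('bt, 'ix, 'v) model \<Rightarrow> bool" where
  "model_ok M \<longleftrightarrow>
     (\<forall>b. is_direct_factor_system (BI M b) (Ble M b) (BSt M b) (Btri M b) (Bemb M b) (Bproj M b))
   \<and> vtrue M \<noteq> vfalse M
   \<and> St M Prop IProp = {vtrue M, vfalse M}
   \<and> (\<forall>b. \<forall>x\<in>BI M b. St M (Base b) (IB x) = BSt M b x)
   \<and> (\<forall>\<rho> \<sigma>. \<forall>i\<in>Idx M \<rho>. \<forall>j\<in>Idx M \<sigma>.
        bij_betw (\<lambda>v. restrict (ap M v) (St M \<rho> i)) (St M (Arr \<rho> \<sigma>) (IArr i j))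
          {f \<in> St M \<rho> i \<rightarrow>\<^sub>E St M \<sigma> j. \<forall>a\<in>St M \<rho> i. \<forall>b\<in>St M \<rho> i.
              sim M \<rho> i a i b \<longrightarrow> sim M \<sigma> j (f a) j (f b)})"

definition ctx_states :: "('bt, 'ix, 'v) model \<Rightarrow> 'bt ty list \<Rightarrow> 'ix idx list \<Rightarrow> 'v list set" where
  "ctx_states M \<Gamma> C = {as. length as = length \<Gamma> \<and> (\<forall>k<length \<Gamma>. as ! k \<in> St M (\<Gamma> ! k) (C ! k))}"

text \<open>sval M Gamma C r rho j F : there is a derivation of C |- r : j (r having type rho in Gamma),
and F maps each vector of states as in [[Gamma]]_C to the state value of r along that derivation.\<close>
inductive sval :: "('bt, 'ix, 'v) model \<Rightarrow> 'bt ty list \<Rightarrow> 'ix idx list \<Rightarrow> 'bt trm \<Rightarrow> 'bt ty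
    \<Rightarrow> 'ix idx \<Rightarrow> ('v list \<Rightarrow> 'v) \<Rightarrow> bool" for M where
  sVarPos: "k < length \<Gamma> \<Longrightarrow> pos (\<Gamma> ! k) \<Longrightarrow> j \<in> Idx M (\<Gamma> ! k) \<Longrightarrow> le M (\<Gamma> ! k) (C ! k) j
      \<Longrightarrow> sval M \<Gamma> C (Var k) (\<Gamma> ! k) j (\<lambda>as. emb M (\<Gamma> ! k) (C ! k) j (as ! k))"
| sVarNeg: "k < length \<Gamma> \<Longrightarrow> neg (\<Gamma> ! k) \<Longrightarrow> j \<in> Idx M (\<Gamma> ! k) \<Longrightarrow> le M (\<Gamma> ! k) j (C ! k)
      \<Longrightarrow> sval M \<Gamma> C (Var k) (\<Gamma> ! k) j (\<lambda>as. proj M (\<Gamma> ! k) (C ! k) j (as ! k))"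
| sApp: "sval M \<Gamma> C r (Arr \<rho> \<sigma>) (IArr i j) F \<Longrightarrow> sval M \<Gamma> C s \<rho> i G
      \<Longrightarrow> sval M \<Gamma> C (App r s) \<sigma> j (\<lambda>as. ap M (F as) (G as))"
| sLam: "i \<in> Idx M \<rho> \<Longrightarrow> sval M (\<Gamma> @ [\<rho>]) (C @ [i]) r \<sigma> j F
      \<Longrightarrow> sval M \<Gamma> C (Lam (length \<Gamma>) \<rho> r) (Arr \<rho> \<sigma>) (IArr i j)
            (\<lambda>as. THE v. v \<in> St M (Arr \<rho> \<sigma>) (IArr i j)
                     \<and> (\<forall>b\<in>St M \<rho> i. ap M v b = F (as @ [b])))"

end

theory Submission
  imports Defs
begin

fun R :: "('bt, 'ix, 'v) model \<Rightarrow> 'bt ty \<Rightarrow> 'ix idx \<Rightarrow> 'v \<Rightarrow> 'ix idx \<Rightarrow> 'v \<Rightarrow> bool" where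
  "R M Prop IProp a IProp b = (a = b)"
| "R M (Base bt) (IB x) a (IB y) b = sim M (Base bt) (IB x) a (IB y) b"
| "R M (Arr r s) (IArr i j) f (IArr i' j') g =
     (\<forall>a\<in>St M r i. \<forall>b\<in>St M r i'. R M r i a i' b \<longrightarrow> R M s j (ap M f a) j' (ap M g b))"
| "R M _ _ _ _ _ = False"

lemma sim_sym: "sim M \<rho> i a j b \<Longrightarrow> sim M \<rho> j b i a"
  unfolding sim_def by blast

lemma R_sym: "R M \<rho> i a j b \<Longrightarrow> R M \<rho> j b i a"
proof (induction \<rho> arbitrary: i a j b)
  case Prop
  then show ?case by (cases i; cases j; auto)
next
  case (Base x)
  then show ?case by (cases i; cases j; auto intro: sim_sym)
next
  case (Arr r s)
  then show ?case by (cases i; cases j; auto)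
qed

section \<open>Direct factor systems\<close>

lemma sys_sim_sym: "sys_sim I L S T i a j b \<Longrightarrow> sys_sim I L S T j b i a"
  unfolding sys_sim_def by blast

context
  fixes I L S T E P
  assumes D: "is_direct_factor_system I L S T E P"
begin

lemma D_fs: "is_factor_system I L S T E P"
  using D unfolding is_direct_factor_system_def by blast
lemma D_pfs: "is_prefactor_system I L S T"
  using D_fs unfolding is_factor_system_def by blast
lemma D_sys: "is_system I L S T"
  using D_pfs unfolding is_prefactor_system_def by blast
lemma D_dp: "directed_preorder I L"
  using D_sys unfolding is_system_def by blast

lemma D_le_refl: "i \<in> I \<Longrightarrow> L i i"
  using D_dp unfolding directed_preorder_def by blast
lemma D_le_trans: "i \<in> I \<Longrightarrow> j \<in> I \<Longrightarrow> k \<in> I \<Longrightarrow> L i j \<Longrightarrow> L j k \<Longrightarrow> L i k"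
  using D_dp unfolding directed_preorder_def by blast
lemma D_dir: "i \<in> I \<Longrightarrow> j \<in> I \<Longrightarrow> \<exists>k\<in>I. L i k \<and> L j k"
  using D_dp unfolding directed_preorder_def by blast
lemma D_tri_refl: "i \<in> I \<Longrightarrow> a \<in> S i \<Longrightarrow> T i i a a"
  using D_sys unfolding is_system_def by blast
lemma D_tri_mem: "T i' i a' a \<Longrightarrow> i \<in> I \<and> i' \<in> I \<and> L i i' \<and> a' \<in> S i' \<and> a \<in> S i"
  using D_sys unfolding is_system_def by blast
lemma D_pf: "i \<in> I \<Longrightarrow> i' \<in> I \<Longrightarrow> L i i' \<Longrightarrow> a' \<in> S i' \<Longrightarrow> a \<in> S i \<Longrightarrow>
    sys_sim I L S T i' a' i a \<longleftrightarrow> T i' i a' a"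
  using D_pfs unfolding is_prefactor_system_def by blast
lemma D_emb_in: "i \<in> I \<Longrightarrow> i' \<in> I \<Longrightarrow> L i i' \<Longrightarrow> a \<in> S i \<Longrightarrow> E i i' a \<in> S i'"
  using D_fs unfolding is_factor_system_def by blast
lemma D_proj_in: "i \<in> I \<Longrightarrow> i' \<in> I \<Longrightarrow> L i i' \<Longrightarrow> a \<in> S i' \<Longrightarrow> P i' i a \<in> S i"
  using D_fs unfolding is_factor_system_def by blast
lemma D_emb_sim: "i \<in> I \<Longrightarrow> i' \<in> I \<Longrightarrow> L i i' \<Longrightarrow> a \<in> S i \<Longrightarrow> b \<in> S i \<Longrightarrow>
    sys_sim I L S T i a i b \<Longrightarrow> sys_sim I L S T i' (E i i' a) i' (E i i' b)"
  using D_fs unfolding is_factor_system_def by blast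
lemma D_proj_sim: "i \<in> I \<Longrightarrow> i' \<in> I \<Longrightarrow> L i i' \<Longrightarrow> a \<in> S i' \<Longrightarrow> b \<in> S i' \<Longrightarrow>
    sys_sim I L S T i' a i' b \<Longrightarrow> sys_sim I L S T i (P i' i a) i (P i' i b)"
  using D_fs unfolding is_factor_system_def by blast
lemma D_tri_emb: "i \<in> I \<Longrightarrow> i' \<in> I \<Longrightarrow> i'' \<in> I \<Longrightarrow> L i i' \<Longrightarrow> L i' i'' \<Longrightarrow>
    a' \<in> S i' \<Longrightarrow> a \<in> S i \<Longrightarrow> T i' i a' a \<Longrightarrow> T i'' i (E i' i'' a') a"
  using D_fs unfolding is_factor_system_def by blast
lemma D_tri_proj: "i \<in> I \<Longrightarrow> i' \<in> I \<Longrightarrow> i'' \<in> I \<Longrightarrow> L i i' \<Longrightarrow> L i' i'' \<Longrightarrow>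
    a'' \<in> S i'' \<Longrightarrow> a \<in> S i \<Longrightarrow> T i'' i a'' a \<Longrightarrow> T i' i (P i'' i' a'') a"
  using D_fs unfolding is_factor_system_def by blast
lemma D_direct: "i \<in> I \<Longrightarrow> i' \<in> I \<Longrightarrow> L i i' \<Longrightarrow> a' \<in> S i' \<Longrightarrow> a \<in> S i \<Longrightarrow>
    T i' i a' a \<longleftrightarrow> sys_sim I L S T i' a' i' (E i i' a)"
  using D unfolding is_direct_factor_system_def by blast

lemma D_same_trans:
  assumes n: "n \<in> I" and x: "x \<in> S n" and y: "y \<in> S n" and z: "z \<in> S n"
    and xy: "sys_sim I L S T n x n y" and yz: "sys_sim I L S T n y n z"
  shows "sys_sim I L S T n x n z"
proof -
  have "T n n y x" using D_pf[OF n n D_le_refl[OF n] y x] sys_sim_sym[OF xy] by blast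
  moreover have "T n n y z" using D_pf[OF n n D_le_refl[OF n] y z] yz by blast
  ultimately show ?thesis unfolding sys_sim_def using n D_le_refl[OF n] y by blast
qed

lemma D_trans:
  assumes i: "i \<in> I" and j: "j \<in> I" and l: "l \<in> I"
    and a: "a \<in> S i" and b: "b \<in> S j" and c: "c \<in> S l"
    and ab: "sys_sim I L S T i a j b" and bc: "sys_sim I L S T j b l c"
  shows "sys_sim I L S T i a l c"
proof -
  obtain k d where k: "k \<in> I" "L i k" "L j k" and d: "d \<in> S k" "T k i d a" "T k j d b"
    using ab unfolding sys_sim_def by blast
  obtain m e where m: "m \<in> I" "L j m" "L l m" and e: "e \<in> S m" "T m j e b" "T m l e c"
    using bc unfolding sys_sim_def by blast
  obtain n where n: "n \<in> I" "L k n" "L m n" using D_dir[OF k(1) m(1)] by blast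
  have le_in: "L i n" "L j n" "L l n"
    using D_le_trans[OF i k(1) n(1) k(2) n(2)] D_le_trans[OF j k(1) n(1) k(3) n(2)]
      D_le_trans[OF l m(1) n(1) m(3) n(3)] by auto
  define d' where "d' = E k n d"
  define e' where "e' = E m n e"
  have d'S: "d' \<in> S n" unfolding d'_def using D_emb_in[OF k(1) n(1) n(2) d(1)] .
  have e'S: "e' \<in> S n" unfolding e'_def using D_emb_in[OF m(1) n(1) n(3) e(1)] .
  have t1: "T n i d' a" unfolding d'_def using D_tri_emb[OF i k(1) n(1) k(2) n(2) d(1) a d(2)] .
  have t2: "T n j d' b" unfolding d'_def using D_tri_emb[OF j k(1) n(1) k(3) n(2) d(1) b d(3)] .
  have t3: "T n j e' b" unfolding e'_def using D_tri_emb[OF j m(1) n(1) m(2) n(3) e(1) b e(2)] .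
  have t4: "T n l e' c" unfolding e'_def using D_tri_emb[OF l m(1) n(1) m(3) n(3) e(1) c e(3)] .
  have ebM: "E j n b \<in> S n" using D_emb_in[OF j n(1) le_in(2) b] .
  have ecM: "E l n c \<in> S n" using D_emb_in[OF l n(1) le_in(3) c] .
  have s1: "sys_sim I L S T n d' n (E j n b)" using D_direct[OF j n(1) le_in(2) d'S b] t2 by blast
  have s2: "sys_sim I L S T n e' n (E j n b)" using D_direct[OF j n(1) le_in(2) e'S b] t3 by blast
  have s3: "sys_sim I L S T n e' n (E l n c)" using D_direct[OF l n(1) le_in(3) e'S c] t4 by blast
  have "sys_sim I L S T n d' n e'"
    using D_same_trans[OF n(1) d'S ebM e'S s1 sys_sim_sym[OF s2]] .
  then have "sys_sim I L S T n d' n (E l n c)"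
    using D_same_trans[OF n(1) d'S e'S ecM _ s3] by blast
  then have t5: "T n l d' c" using D_direct[OF l n(1) le_in(3) d'S c] by blast
  show ?thesis unfolding sys_sim_def using n(1) le_in(1) le_in(3) d'S t1 t5 by blast
qed

end


lemma Idx_Arr_iff: "IArr i j \<in> Idx M (Arr r s) \<longleftrightarrow> i \<in> Idx M r \<and> j \<in> Idx M s"
  by auto

lemma Idx_ArrE: "k \<in> Idx M (Arr r s) \<Longrightarrow> (\<And>i j. k = IArr i j \<Longrightarrow> i \<in> Idx M r \<Longrightarrow> j \<in> Idx M s \<Longrightarrow> P) \<Longrightarrow> P"
  by auto

lemma mo_bij: "model_ok M \<Longrightarrow> i \<in> Idx M r \<Longrightarrow> j \<in> Idx M s \<Longrightarrow>
   bij_betw (\<lambda>v. restrict (ap M v) (St M r i)) (St M (Arr r s) (IArr i j))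
          {f \<in> St M r i \<rightarrow>\<^sub>E St M s j. \<forall>a\<in>St M r i. \<forall>b\<in>St M r i.
              sim M r i a i b \<longrightarrow> sim M s j (f a) j (f b)}"
  unfolding model_ok_def by blast

lemma ap_St: assumes "model_ok M" "i \<in> Idx M r" "j \<in> Idx M s" "f \<in> St M (Arr r s) (IArr i j)" "x \<in> St M r i"
  shows "ap M f x \<in> St M s j"
proof -
  have "restrict (ap M f) (St M r i) \<in> St M r i \<rightarrow>\<^sub>E St M s j"
    using bij_betwE[OF mo_bij[OF assms(1-3)]] assms(4) by blast
  then show ?thesis using assms(5) by (auto dest: PiE_mem)
qed

lemma ap_sim: assumes "model_ok M" "i \<in> Idx M r" "j \<in> Idx M s" "f \<in> St M (Arr r s) (IArr i j)"
    "x \<in> St M r i" "y \<in> St M r i" "sim M r i x i y"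
  shows "sim M s j (ap M f x) j (ap M f y)"
proof -
  have "restrict (ap M f) (St M r i) \<in> {f \<in> St M r i \<rightarrow>\<^sub>E St M s j. \<forall>a\<in>St M r i. \<forall>b\<in>St M r i.
              sim M r i a i b \<longrightarrow> sim M s j (f a) j (f b)}"
    using bij_betwE[OF mo_bij[OF assms(1-3)]] assms(4) by blast
  then show ?thesis using assms(5-7) by auto
qed

lemma THE_St:
  assumes mo: "model_ok M" and i: "i \<in> Idx M r" and j: "j \<in> Idx M s"
    and g1: "\<And>x. x \<in> St M r i \<Longrightarrow> g x \<in> St M s j"
    and g2: "\<And>x y. x \<in> St M r i \<Longrightarrow> y \<in> St M r i \<Longrightarrow> sim M r i x i y \<Longrightarrow> sim M s j (g x) j (g y)"
  shows "(THE v. v \<in> St M (Arr r s) (IArr i j) \<and> (\<forall>x\<in>St M r i. ap M v x = g x)) \<in> St M (Arr r s) (IArr i j)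
     \<and> (\<forall>x\<in>St M r i. ap M (THE v. v \<in> St M (Arr r s) (IArr i j) \<and> (\<forall>x\<in>St M r i. ap M v x = g x)) x = g x)"
proof -
  let ?B = "{f \<in> St M r i \<rightarrow>\<^sub>E St M s j. \<forall>a\<in>St M r i. \<forall>b\<in>St M r i.
              sim M r i a i b \<longrightarrow> sim M s j (f a) j (f b)}"
  have bij: "bij_betw (\<lambda>v. restrict (ap M v) (St M r i)) (St M (Arr r s) (IArr i j)) ?B"
    using mo_bij[OF mo i j] .
  have "restrict g (St M r i) \<in> ?B" using g1 g2 by auto
  then obtain v where v: "v \<in> St M (Arr r s) (IArr i j)" "restrict (ap M v) (St M r i) = restrict g (St M r i)"
    using bij unfolding bij_betw_def by (metis (no_types, lifting) imageE)
  have ex: "\<exists>!v. v \<in> St M (Arr r s) (IArr i j) \<and> (\<forall>x\<in>St M r i. ap M v x = g x)"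
  proof (rule ex1I[of _ v])
    show "v \<in> St M (Arr r s) (IArr i j) \<and> (\<forall>x\<in>St M r i. ap M v x = g x)"
      using v by (metis restrict_apply')
  next
    fix w assume w: "w \<in> St M (Arr r s) (IArr i j) \<and> (\<forall>x\<in>St M r i. ap M w x = g x)"
    then have "restrict (ap M w) (St M r i) = restrict (ap M v) (St M r i)"
      using v by (auto simp: restrict_def)
    then show "w = v" using bij w v(1) unfolding bij_betw_def inj_on_def by blast
  qed
  show ?thesis using theI'[OF ex] by blast
qed

lemma emb_Arr_St:
  assumes mo: "model_ok M" and i': "i' \<in> Idx M r" and j': "j' \<in> Idx M s"
    and g1: "\<And>x. x \<in> St M r i' \<Longrightarrow> emb M s j j' (ap M f (proj M r i' i x)) \<in> St M s j'"
    and g2: "\<And>x y. x \<in> St M r i' \<Longrightarrow> y \<in> St M r i' \<Longrightarrow> sim M r i' x i' y \<Longrightarrow>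
        sim M s j' (emb M s j j' (ap M f (proj M r i' i x))) j' (emb M s j j' (ap M f (proj M r i' i y)))"
  shows "emb M (Arr r s) (IArr i j) (IArr i' j') f \<in> St M (Arr r s) (IArr i' j')
    \<and> (\<forall>x\<in>St M r i'. ap M (emb M (Arr r s) (IArr i j) (IArr i' j') f) x = emb M s j j' (ap M f (proj M r i' i x)))"
  using THE_St[OF mo i' j', of "\<lambda>x. emb M s j j' (ap M f (proj M r i' i x))"] g1 g2 by simp

lemma proj_Arr_St:
  assumes mo: "model_ok M" and i: "i \<in> Idx M r" and j: "j \<in> Idx M s"
    and g1: "\<And>x. x \<in> St M r i \<Longrightarrow> proj M s j' j (ap M f (emb M r i i' x)) \<in> St M s j"
    and g2: "\<And>x y. x \<in> St M r i \<Longrightarrow> y \<in> St M r i \<Longrightarrow> sim M r i x i y \<Longrightarrow>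
        sim M s j (proj M s j' j (ap M f (emb M r i i' x))) j (proj M s j' j (ap M f (emb M r i i' y)))"
  shows "proj M (Arr r s) (IArr i' j') (IArr i j) f \<in> St M (Arr r s) (IArr i j)
    \<and> (\<forall>x\<in>St M r i. ap M (proj M (Arr r s) (IArr i' j') (IArr i j) f) x = proj M s j' j (ap M f (emb M r i i' x)))"
  using THE_St[OF mo i j, of "\<lambda>x. proj M s j' j (ap M f (emb M r i i' x))"] g1 g2 by simp

lemma mo_D: "model_ok M \<Longrightarrow> is_direct_factor_system (BI M b) (Ble M b) (BSt M b) (Btri M b) (Bemb M b) (Bproj M b)"
  unfolding model_ok_def by blast

lemma St_Base: "model_ok M \<Longrightarrow> x \<in> BI M b \<Longrightarrow> St M (Base b) (IB x) = BSt M b x"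
  unfolding model_ok_def by blast

lemma sim_Base: assumes "model_ok M"
  shows "sim M (Base b) (IB x) a (IB y) c \<longleftrightarrow> sys_sim (BI M b) (Ble M b) (BSt M b) (Btri M b) x a y c"
  unfolding sim_def sys_sim_def using St_Base[OF assms] by auto


section \<open>Good types\<close>

definition "gLe M \<rho> \<longleftrightarrow> (\<forall>i\<in>Idx M \<rho>. le M \<rho> i i)"
definition "gRefl M \<rho> \<longleftrightarrow> (\<forall>i\<in>Idx M \<rho>. \<forall>a\<in>St M \<rho> i. R M \<rho> i a i a)"
definition "gP1 M \<rho> \<longleftrightarrow> (\<forall>i\<in>Idx M \<rho>. \<forall>i'\<in>Idx M \<rho>. le M \<rho> i i' \<longrightarrow>
    (\<forall>a\<in>St M \<rho> i. \<forall>a'\<in>St M \<rho> i'. tri M \<rho> i' i a' a \<longleftrightarrow> R M \<rho> i a i' a'))"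
definition "gSR M \<rho> \<longleftrightarrow> (\<forall>i\<in>Idx M \<rho>. \<forall>a\<in>St M \<rho> i. \<forall>b\<in>St M \<rho> i. sim M \<rho> i a i b \<longrightarrow> R M \<rho> i a i b)"
definition "gEmbSt M \<rho> \<longleftrightarrow> (\<forall>i\<in>Idx M \<rho>. \<forall>i'\<in>Idx M \<rho>. le M \<rho> i i' \<longrightarrow>
    (\<forall>a\<in>St M \<rho> i. emb M \<rho> i i' a \<in> St M \<rho> i'))"
definition "gProjSt M \<rho> \<longleftrightarrow> (\<forall>i\<in>Idx M \<rho>. \<forall>i'\<in>Idx M \<rho>. le M \<rho> i i' \<longrightarrow>
    (\<forall>a\<in>St M \<rho> i'. proj M \<rho> i' i a \<in> St M \<rho> i))"
definition "gEmR M \<rho> \<longleftrightarrow> (\<forall>i\<in>Idx M \<rho>. \<forall>i'\<in>Idx M \<rho>. le M \<rho> i i' \<longrightarrow>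
    (\<forall>a\<in>St M \<rho> i. \<forall>b\<in>St M \<rho> i. R M \<rho> i a i b \<longrightarrow> R M \<rho> i' (emb M \<rho> i i' a) i' (emb M \<rho> i i' b)))"
definition "gPrR M \<rho> \<longleftrightarrow> (\<forall>i\<in>Idx M \<rho>. \<forall>i'\<in>Idx M \<rho>. le M \<rho> i i' \<longrightarrow>
    (\<forall>a\<in>St M \<rho> i'. \<forall>b\<in>St M \<rho> i'. R M \<rho> i' a i' b \<longrightarrow> R M \<rho> i (proj M \<rho> i' i a) i (proj M \<rho> i' i b)))"
definition "gE M \<rho> \<longleftrightarrow> (\<forall>i\<in>Idx M \<rho>. \<forall>i'\<in>Idx M \<rho>. \<forall>i''\<in>Idx M \<rho>. le M \<rho> i i' \<longrightarrow> le M \<rho> i' i'' \<longrightarrow>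
    (\<forall>a\<in>St M \<rho> i. \<forall>a'\<in>St M \<rho> i'. R M \<rho> i a i' a' \<longrightarrow> R M \<rho> i a i'' (emb M \<rho> i' i'' a')))"
definition "gPr M \<rho> \<longleftrightarrow> (\<forall>i\<in>Idx M \<rho>. \<forall>i'\<in>Idx M \<rho>. \<forall>i''\<in>Idx M \<rho>. le M \<rho> i i' \<longrightarrow> le M \<rho> i' i'' \<longrightarrow>
    (\<forall>a\<in>St M \<rho> i. \<forall>a''\<in>St M \<rho> i''. R M \<rho> i a i'' a'' \<longrightarrow> R M \<rho> i a i' (proj M \<rho> i'' i' a'')))"
definition "gPos M \<rho> \<longleftrightarrow> (pos \<rho> \<longrightarrow> (\<forall>c1\<in>Idx M \<rho>. \<forall>j1\<in>Idx M \<rho>. \<forall>c2\<in>Idx M \<rho>. \<forall>j2\<in>Idx M \<rho>.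
    le M \<rho> c1 j1 \<longrightarrow> le M \<rho> c2 j2 \<longrightarrow> (\<forall>a1\<in>St M \<rho> c1. \<forall>a2\<in>St M \<rho> c2.
      R M \<rho> c1 a1 c2 a2 \<longrightarrow> R M \<rho> j1 (emb M \<rho> c1 j1 a1) j2 (emb M \<rho> c2 j2 a2))))"
definition "gNeg M \<rho> \<longleftrightarrow> (neg \<rho> \<longrightarrow> (\<forall>c1\<in>Idx M \<rho>. \<forall>j1\<in>Idx M \<rho>. \<forall>c2\<in>Idx M \<rho>. \<forall>j2\<in>Idx M \<rho>.
    le M \<rho> j1 c1 \<longrightarrow> le M \<rho> j2 c2 \<longrightarrow> (\<forall>a1\<in>St M \<rho> c1. \<forall>a2\<in>St M \<rho> c2.
      R M \<rho> c1 a1 c2 a2 \<longrightarrow> R M \<rho> j1 (proj M \<rho> c1 j1 a1) j2 (proj M \<rho> c2 j2 a2))))"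
definition "gPN M \<rho> \<longleftrightarrow> (pos \<rho> \<and> neg \<rho> \<longrightarrow> (\<forall>c1\<in>Idx M \<rho>. \<forall>j1\<in>Idx M \<rho>. \<forall>c2\<in>Idx M \<rho>. \<forall>j2\<in>Idx M \<rho>.
    le M \<rho> c1 j1 \<longrightarrow> le M \<rho> j2 c2 \<longrightarrow> (\<forall>a1\<in>St M \<rho> c1. \<forall>a2\<in>St M \<rho> c2.
      R M \<rho> c1 a1 c2 a2 \<longrightarrow> R M \<rho> j1 (emb M \<rho> c1 j1 a1) j2 (proj M \<rho> c2 j2 a2))))"

definition "good M \<rho> \<longleftrightarrow> gLe M \<rho> \<and> gRefl M \<rho> \<and> gP1 M \<rho> \<and> gSR M \<rho> \<and> gEmbSt M \<rho> \<and> gProjSt M \<rho>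
   \<and> gEmR M \<rho> \<and> gPrR M \<rho> \<and> gE M \<rho> \<and> gPr M \<rho> \<and> gPos M \<rho> \<and> gNeg M \<rho> \<and> gPN M \<rho>"

lemmas g_defs = gLe_def gRefl_def gP1_def gSR_def gEmbSt_def gProjSt_def gEmR_def gPrR_def gE_def gPr_def
  gPos_def gNeg_def gPN_def

lemma good_Prop: "model_ok M \<Longrightarrow> good M Prop"
  unfolding good_def g_defs sim_def by auto

lemma good_Base:
  assumes mo: "model_ok M"
  shows "good M (Base b)"
proof -
  note D = mo_D[OF mo, of b]
  note StB = St_Base[OF mo]
  note simB = sim_Base[OF mo]
  let ?s = "sys_sim (BI M b) (Ble M b) (BSt M b) (Btri M b)"
  have Le: "gLe M (Base b)" unfolding gLe_def using D_le_refl[OF D] by auto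
  have Refl: "gRefl M (Base b)" unfolding gRefl_def
  proof (intro ballI)
    fix i a assume i: "i \<in> Idx M (Base b)" and a: "a \<in> St M (Base b) i"
    then obtain x where x: "i = IB x" "x \<in> BI M b" by auto
    have aB: "a \<in> BSt M b x" using a x StB by auto
    have "?s x a x a" unfolding sys_sim_def using x(2) D_le_refl[OF D x(2)] aB D_tri_refl[OF D x(2) aB] by blast
    then show "R M (Base b) i a i a" using x simB by simp
  qed
  have P1: "gP1 M (Base b)" unfolding gP1_def
  proof (intro ballI impI)
    fix i i' a a' assume i: "i \<in> Idx M (Base b)" and i': "i' \<in> Idx M (Base b)" and le: "le M (Base b) i i'"
      and a: "a \<in> St M (Base b) i" and a': "a' \<in> St M (Base b) i'"
    then obtain x x' where x: "i = IB x" "x \<in> BI M b" "i' = IB x'" "x' \<in> BI M b" by auto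
    show "tri M (Base b) i' i a' a \<longleftrightarrow> R M (Base b) i a i' a'"
    proof -
      have aa: "a \<in> BSt M b x" "a' \<in> BSt M b x'" using a a' x StB by auto
      have l: "Ble M b x x'" using le x by simp
      have 1: "Btri M b x' x a' a \<longleftrightarrow> ?s x' a' x a" using D_pf[OF D x(2) x(4) l aa(2) aa(1)] by blast
      have 2: "?s x' a' x a \<longleftrightarrow> ?s x a x' a'" by (blast intro: sys_sim_sym)
      show ?thesis using 1 2 x simB by simp
    qed
  qed
  have SR: "gSR M (Base b)" unfolding gSR_def
  proof (intro ballI impI)
    fix i a c assume i: "i \<in> Idx M (Base b)" and "sim M (Base b) i a i c"
    then show "R M (Base b) i a i c" by auto
  qed
  have ES: "gEmbSt M (Base b)" unfolding gEmbSt_def using StB D_emb_in[OF D] by auto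
  have PS: "gProjSt M (Base b)" unfolding gProjSt_def using StB D_proj_in[OF D] by auto
  have ER: "gEmR M (Base b)" unfolding gEmR_def using StB simB D_emb_sim[OF D] by auto
  have PR: "gPrR M (Base b)" unfolding gPrR_def using StB simB D_proj_sim[OF D] by auto
  have E: "gE M (Base b)" unfolding gE_def
  proof (intro ballI impI)
    fix i i' i'' a a' assume i: "i \<in> Idx M (Base b)" and i': "i' \<in> Idx M (Base b)" and i'': "i'' \<in> Idx M (Base b)"
      and l1: "le M (Base b) i i'" and l2: "le M (Base b) i' i''"
      and a: "a \<in> St M (Base b) i" and a': "a' \<in> St M (Base b) i'" and r: "R M (Base b) i a i' a'"
    then obtain x x' x'' where x: "i = IB x" "x \<in> BI M b" "i' = IB x'" "x' \<in> BI M b" "i'' = IB x''" "x'' \<in> BI M b" by auto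
    have l: "Ble M b x x'" "Ble M b x' x''" using l1 l2 x by auto
    have aa: "a \<in> BSt M b x" "a' \<in> BSt M b x'" using a a' x StB by auto
    have "?s x a x' a'" using r x simB by simp
    then have "Btri M b x' x a' a" using D_pf[OF D x(2) x(4) l(1) aa(2) aa(1)] sys_sim_sym by metis
    then have t: "Btri M b x'' x (Bemb M b x' x'' a') a" using D_tri_emb[OF D x(2) x(4) x(6) l aa(2) aa(1)] by blast
    have e: "Bemb M b x' x'' a' \<in> BSt M b x''" using D_emb_in[OF D x(4) x(6) l(2) aa(2)] .
    have l3: "Ble M b x x''" using D_le_trans[OF D x(2) x(4) x(6) l] .
    have "?s x a x'' (Bemb M b x' x'' a')" using D_pf[OF D x(2) x(6) l3 e aa(1)] t sys_sim_sym by metis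
    then show "R M (Base b) i a i'' (emb M (Base b) i' i'' a')" using x simB by simp
  qed
  have Pr: "gPr M (Base b)" unfolding gPr_def
  proof (intro ballI impI)
    fix i i' i'' a a'' assume i: "i \<in> Idx M (Base b)" and i': "i' \<in> Idx M (Base b)" and i'': "i'' \<in> Idx M (Base b)"
      and l1: "le M (Base b) i i'" and l2: "le M (Base b) i' i''"
      and a: "a \<in> St M (Base b) i" and a'': "a'' \<in> St M (Base b) i''" and r: "R M (Base b) i a i'' a''"
    then obtain x x' x'' where x: "i = IB x" "x \<in> BI M b" "i' = IB x'" "x' \<in> BI M b" "i'' = IB x''" "x'' \<in> BI M b" by auto
    have l: "Ble M b x x'" "Ble M b x' x''" using l1 l2 x by auto
    have l3: "Ble M b x x''" using D_le_trans[OF D x(2) x(4) x(6) l] .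
    have aa: "a \<in> BSt M b x" "a'' \<in> BSt M b x''" using a a'' x StB by auto
    have "?s x a x'' a''" using r x simB by simp
    then have "Btri M b x'' x a'' a" using D_pf[OF D x(2) x(6) l3 aa(2) aa(1)] sys_sim_sym by metis
    then have t: "Btri M b x' x (Bproj M b x'' x' a'') a" using D_tri_proj[OF D x(2) x(4) x(6) l aa(2) aa(1)] by blast
    have e: "Bproj M b x'' x' a'' \<in> BSt M b x'" using D_proj_in[OF D x(4) x(6) l(2) aa(2)] .
    have "?s x a x' (Bproj M b x'' x' a'')" using D_pf[OF D x(2) x(4) l(1) e aa(1)] t sys_sim_sym by metis
    then show "R M (Base b) i a i' (proj M (Base b) i'' i' a'')" using x simB by simp
  qed
  have Pos: "gPos M (Base b)" unfolding gPos_def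
  proof (intro impI ballI)
    fix c1 j1 c2 j2 a1 a2 assume c1: "c1 \<in> Idx M (Base b)" and j1: "j1 \<in> Idx M (Base b)"
      and c2: "c2 \<in> Idx M (Base b)" and j2: "j2 \<in> Idx M (Base b)"
      and l1: "le M (Base b) c1 j1" and l2: "le M (Base b) c2 j2"
      and a1: "a1 \<in> St M (Base b) c1" and a2: "a2 \<in> St M (Base b) c2" and r: "R M (Base b) c1 a1 c2 a2"
    then obtain y1 z1 y2 z2 where x: "c1 = IB y1" "y1 \<in> BI M b" "j1 = IB z1" "z1 \<in> BI M b"
       "c2 = IB y2" "y2 \<in> BI M b" "j2 = IB z2" "z2 \<in> BI M b" by auto
    have l: "Ble M b y1 z1" "Ble M b y2 z2" using l1 l2 x by auto
    have aa: "a1 \<in> BSt M b y1" "a2 \<in> BSt M b y2" using a1 a2 x StB by auto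
    have s: "?s y1 a1 y2 a2" using r x simB by simp
    have e1: "Bemb M b y1 z1 a1 \<in> BSt M b z1" using D_emb_in[OF D x(2) x(4) l(1) aa(1)] .
    have e2: "Bemb M b y2 z2 a2 \<in> BSt M b z2" using D_emb_in[OF D x(6) x(8) l(2) aa(2)] .
    have t1: "Btri M b z1 y1 (Bemb M b y1 z1 a1) a1"
      using D_tri_emb[OF D x(2) x(2) x(4) D_le_refl[OF D x(2)] l(1) aa(1) aa(1) D_tri_refl[OF D x(2) aa(1)]] .
    have t2: "Btri M b z2 y2 (Bemb M b y2 z2 a2) a2"
      using D_tri_emb[OF D x(6) x(6) x(8) D_le_refl[OF D x(6)] l(2) aa(2) aa(2) D_tri_refl[OF D x(6) aa(2)]] .
    have s1: "?s z1 (Bemb M b y1 z1 a1) y1 a1" using D_pf[OF D x(2) x(4) l(1) e1 aa(1)] t1 by blast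
    have s2: "?s y2 a2 z2 (Bemb M b y2 z2 a2)" using D_pf[OF D x(6) x(8) l(2) e2 aa(2)] t2 sys_sim_sym by metis
    have "?s z1 (Bemb M b y1 z1 a1) y2 a2" using D_trans[OF D x(4) x(2) x(6) e1 aa(1) aa(2) s1 s] .
    then have "?s z1 (Bemb M b y1 z1 a1) z2 (Bemb M b y2 z2 a2)" using D_trans[OF D x(4) x(6) x(8) e1 aa(2) e2 _ s2] by blast
    then show "R M (Base b) j1 (emb M (Base b) c1 j1 a1) j2 (emb M (Base b) c2 j2 a2)" using x simB by simp
  qed
  have Neg: "gNeg M (Base b)" unfolding gNeg_def by simp
  have PN: "gPN M (Base b)" unfolding gPN_def by simp
  show ?thesis unfolding good_def using Le Refl P1 SR ES PS ER PR E Pr Pos Neg PN by blast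
qed


context
  fixes M :: "('bt, 'ix, 'v) model" and \<rho> :: "'bt ty"
  assumes G: "good M \<rho>"
begin
lemma gLe_D: "i \<in> Idx M \<rho> \<Longrightarrow> le M \<rho> i i"
  using G unfolding good_def gLe_def by blast
lemma gRefl_D: "i \<in> Idx M \<rho> \<Longrightarrow> a \<in> St M \<rho> i \<Longrightarrow> R M \<rho> i a i a"
  using G unfolding good_def gRefl_def by blast
lemma gP1_D: "i \<in> Idx M \<rho> \<Longrightarrow> i' \<in> Idx M \<rho> \<Longrightarrow> le M \<rho> i i' \<Longrightarrow> a \<in> St M \<rho> i \<Longrightarrow> a' \<in> St M \<rho> i'
   \<Longrightarrow> tri M \<rho> i' i a' a \<longleftrightarrow> R M \<rho> i a i' a'"
  using G unfolding good_def gP1_def by blast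
lemma gSR_D: "i \<in> Idx M \<rho> \<Longrightarrow> a \<in> St M \<rho> i \<Longrightarrow> b \<in> St M \<rho> i \<Longrightarrow> sim M \<rho> i a i b \<Longrightarrow> R M \<rho> i a i b"
  using G unfolding good_def gSR_def by blast
lemma gEmbSt_D: "i \<in> Idx M \<rho> \<Longrightarrow> i' \<in> Idx M \<rho> \<Longrightarrow> le M \<rho> i i' \<Longrightarrow> a \<in> St M \<rho> i \<Longrightarrow> emb M \<rho> i i' a \<in> St M \<rho> i'"
  using G unfolding good_def gEmbSt_def by blast
lemma gProjSt_D: "i \<in> Idx M \<rho> \<Longrightarrow> i' \<in> Idx M \<rho> \<Longrightarrow> le M \<rho> i i' \<Longrightarrow> a \<in> St M \<rho> i' \<Longrightarrow> proj M \<rho> i' i a \<in> St M \<rho> i"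
  using G unfolding good_def gProjSt_def by blast
lemma gEmR_D: "i \<in> Idx M \<rho> \<Longrightarrow> i' \<in> Idx M \<rho> \<Longrightarrow> le M \<rho> i i' \<Longrightarrow> a \<in> St M \<rho> i \<Longrightarrow> b \<in> St M \<rho> i \<Longrightarrow>
   R M \<rho> i a i b \<Longrightarrow> R M \<rho> i' (emb M \<rho> i i' a) i' (emb M \<rho> i i' b)"
  using G unfolding good_def gEmR_def by blast
lemma gPrR_D: "i \<in> Idx M \<rho> \<Longrightarrow> i' \<in> Idx M \<rho> \<Longrightarrow> le M \<rho> i i' \<Longrightarrow> a \<in> St M \<rho> i' \<Longrightarrow> b \<in> St M \<rho> i' \<Longrightarrow>
   R M \<rho> i' a i' b \<Longrightarrow> R M \<rho> i (proj M \<rho> i' i a) i (proj M \<rho> i' i b)"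
  using G unfolding good_def gPrR_def by blast
lemma gE_D: "i \<in> Idx M \<rho> \<Longrightarrow> i' \<in> Idx M \<rho> \<Longrightarrow> i'' \<in> Idx M \<rho> \<Longrightarrow> le M \<rho> i i' \<Longrightarrow> le M \<rho> i' i'' \<Longrightarrow>
   a \<in> St M \<rho> i \<Longrightarrow> a' \<in> St M \<rho> i' \<Longrightarrow> R M \<rho> i a i' a' \<Longrightarrow> R M \<rho> i a i'' (emb M \<rho> i' i'' a')"
  using G unfolding good_def gE_def by blast
lemma gPr_D: "i \<in> Idx M \<rho> \<Longrightarrow> i' \<in> Idx M \<rho> \<Longrightarrow> i'' \<in> Idx M \<rho> \<Longrightarrow> le M \<rho> i i' \<Longrightarrow> le M \<rho> i' i'' \<Longrightarrow>
   a \<in> St M \<rho> i \<Longrightarrow> a'' \<in> St M \<rho> i'' \<Longrightarrow> R M \<rho> i a i'' a'' \<Longrightarrow> R M \<rho> i a i' (proj M \<rho> i'' i' a'')"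
  using G unfolding good_def gPr_def by blast
lemma gPos_D: "pos \<rho> \<Longrightarrow> c1 \<in> Idx M \<rho> \<Longrightarrow> j1 \<in> Idx M \<rho> \<Longrightarrow> c2 \<in> Idx M \<rho> \<Longrightarrow> j2 \<in> Idx M \<rho> \<Longrightarrow>
   le M \<rho> c1 j1 \<Longrightarrow> le M \<rho> c2 j2 \<Longrightarrow> a1 \<in> St M \<rho> c1 \<Longrightarrow> a2 \<in> St M \<rho> c2 \<Longrightarrow>
   R M \<rho> c1 a1 c2 a2 \<Longrightarrow> R M \<rho> j1 (emb M \<rho> c1 j1 a1) j2 (emb M \<rho> c2 j2 a2)"
  using G unfolding good_def gPos_def by blast
lemma gNeg_D: "neg \<rho> \<Longrightarrow> c1 \<in> Idx M \<rho> \<Longrightarrow> j1 \<in> Idx M \<rho> \<Longrightarrow> c2 \<in> Idx M \<rho> \<Longrightarrow> j2 \<in> Idx M \<rho> \<Longrightarrow>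
   le M \<rho> j1 c1 \<Longrightarrow> le M \<rho> j2 c2 \<Longrightarrow> a1 \<in> St M \<rho> c1 \<Longrightarrow> a2 \<in> St M \<rho> c2 \<Longrightarrow>
   R M \<rho> c1 a1 c2 a2 \<Longrightarrow> R M \<rho> j1 (proj M \<rho> c1 j1 a1) j2 (proj M \<rho> c2 j2 a2)"
  using G unfolding good_def gNeg_def by blast
lemma gPN_D: "pos \<rho> \<Longrightarrow> neg \<rho> \<Longrightarrow> c1 \<in> Idx M \<rho> \<Longrightarrow> j1 \<in> Idx M \<rho> \<Longrightarrow> c2 \<in> Idx M \<rho> \<Longrightarrow> j2 \<in> Idx M \<rho> \<Longrightarrow>
   le M \<rho> c1 j1 \<Longrightarrow> le M \<rho> j2 c2 \<Longrightarrow> a1 \<in> St M \<rho> c1 \<Longrightarrow> a2 \<in> St M \<rho> c2 \<Longrightarrow>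
   R M \<rho> c1 a1 c2 a2 \<Longrightarrow> R M \<rho> j1 (emb M \<rho> c1 j1 a1) j2 (proj M \<rho> c2 j2 a2)"
  using G unfolding good_def gPN_def by blast

lemma gRS_D: assumes "i \<in> Idx M \<rho>" "a \<in> St M \<rho> i" "b \<in> St M \<rho> i" "R M \<rho> i a i b"
  shows "sim M \<rho> i a i b"
proof -
  have "tri M \<rho> i i a a" using gP1_D[OF assms(1,1) gLe_D[OF assms(1)] assms(2,2)] gRefl_D[OF assms(1,2)] by blast
  moreover have "tri M \<rho> i i a b" using gP1_D[OF assms(1,1) gLe_D[OF assms(1)] assms(3,2)] R_sym[OF assms(4)] by blast
  ultimately show ?thesis unfolding sim_def using assms(1,2) gLe_D[OF assms(1)] by blast
qed
end

context
  fixes M :: "('bt, 'ix, 'v) model" and r s :: "'bt ty"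
  assumes mo: "model_ok M" and Gr: "good M r" and Gs: "good M s"
begin

lemma ap_R: assumes i: "i \<in> Idx M r" and j: "j \<in> Idx M s" and f: "f \<in> St M (Arr r s) (IArr i j)"
   and x: "x \<in> St M r i" and y: "y \<in> St M r i" and xy: "R M r i x i y"
 shows "R M s j (ap M f x) j (ap M f y)"
  using gSR_D[OF Gs j ap_St[OF mo i j f x] ap_St[OF mo i j f y] ap_sim[OF mo i j f x y gRS_D[OF Gr i x y xy]]] .

lemma emb_Arr:
  assumes i: "i \<in> Idx M r" and j: "j \<in> Idx M s" and i': "i' \<in> Idx M r" and j': "j' \<in> Idx M s"
    and l1: "le M r i i'" and l2: "le M s j j'" and f: "f \<in> St M (Arr r s) (IArr i j)"
  shows "emb M (Arr r s) (IArr i j) (IArr i' j') f \<in> St M (Arr r s) (IArr i' j')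
    \<and> (\<forall>x\<in>St M r i'. ap M (emb M (Arr r s) (IArr i j) (IArr i' j') f) x = emb M s j j' (ap M f (proj M r i' i x)))"
proof (rule emb_Arr_St[OF mo i' j'])
  fix x assume x: "x \<in> St M r i'"
  show "emb M s j j' (ap M f (proj M r i' i x)) \<in> St M s j'"
    using gEmbSt_D[OF Gs j j' l2 ap_St[OF mo i j f gProjSt_D[OF Gr i i' l1 x]]] .
next
  fix x y assume x: "x \<in> St M r i'" and y: "y \<in> St M r i'" and xy: "sim M r i' x i' y"
  have px: "proj M r i' i x \<in> St M r i" and py: "proj M r i' i y \<in> St M r i"
    using gProjSt_D[OF Gr i i' l1] x y by auto
  have "R M r i (proj M r i' i x) i (proj M r i' i y)"
    using gPrR_D[OF Gr i i' l1 x y gSR_D[OF Gr i' x y xy]] .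
  then have "R M s j (ap M f (proj M r i' i x)) j (ap M f (proj M r i' i y))"
    using ap_R[OF i j f px py] by blast
  then have "R M s j' (emb M s j j' (ap M f (proj M r i' i x))) j' (emb M s j j' (ap M f (proj M r i' i y)))"
    using gEmR_D[OF Gs j j' l2 ap_St[OF mo i j f px] ap_St[OF mo i j f py]] by blast
  then show "sim M s j' (emb M s j j' (ap M f (proj M r i' i x))) j' (emb M s j j' (ap M f (proj M r i' i y)))"
    using gRS_D[OF Gs j'] gEmbSt_D[OF Gs j j' l2 ap_St[OF mo i j f px]] gEmbSt_D[OF Gs j j' l2 ap_St[OF mo i j f py]]
    by blast
qed

lemma proj_Arr:
  assumes i: "i \<in> Idx M r" and j: "j \<in> Idx M s" and i': "i' \<in> Idx M r" and j': "j' \<in> Idx M s"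
    and l1: "le M r i i'" and l2: "le M s j j'" and f: "f \<in> St M (Arr r s) (IArr i' j')"
  shows "proj M (Arr r s) (IArr i' j') (IArr i j) f \<in> St M (Arr r s) (IArr i j)
    \<and> (\<forall>x\<in>St M r i. ap M (proj M (Arr r s) (IArr i' j') (IArr i j) f) x = proj M s j' j (ap M f (emb M r i i' x)))"
proof (rule proj_Arr_St[OF mo i j])
  fix x assume x: "x \<in> St M r i"
  show "proj M s j' j (ap M f (emb M r i i' x)) \<in> St M s j"
    using gProjSt_D[OF Gs j j' l2 ap_St[OF mo i' j' f gEmbSt_D[OF Gr i i' l1 x]]] .
next
  fix x y assume x: "x \<in> St M r i" and y: "y \<in> St M r i" and xy: "sim M r i x i y"
  have px: "emb M r i i' x \<in> St M r i'" and py: "emb M r i i' y \<in> St M r i'"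
    using gEmbSt_D[OF Gr i i' l1] x y by auto
  have "R M r i' (emb M r i i' x) i' (emb M r i i' y)"
    using gEmR_D[OF Gr i i' l1 x y gSR_D[OF Gr i x y xy]] .
  then have "R M s j' (ap M f (emb M r i i' x)) j' (ap M f (emb M r i i' y))"
    using ap_R[OF i' j' f px py] by blast
  then have "R M s j (proj M s j' j (ap M f (emb M r i i' x))) j (proj M s j' j (ap M f (emb M r i i' y)))"
    using gPrR_D[OF Gs j j' l2 ap_St[OF mo i' j' f px] ap_St[OF mo i' j' f py]] by blast
  then show "sim M s j (proj M s j' j (ap M f (emb M r i i' x))) j (proj M s j' j (ap M f (emb M r i i' y)))"
    using gRS_D[OF Gs j] gProjSt_D[OF Gs j j' l2 ap_St[OF mo i' j' f px]] gProjSt_D[OF Gs j j' l2 ap_St[OF mo i' j' f py]]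
    by blast
qed


lemma good_Arr: "good M (Arr r s)"
proof -
  have Le: "gLe M (Arr r s)" unfolding gLe_def using gLe_D[OF Gr] gLe_D[OF Gs] by auto
  have Refl: "gRefl M (Arr r s)" unfolding gRefl_def
  proof (intro ballI)
    fix i f assume i: "i \<in> Idx M (Arr r s)" and f: "f \<in> St M (Arr r s) i"
    then obtain i1 j1 where x: "i = IArr i1 j1" "i1 \<in> Idx M r" "j1 \<in> Idx M s" by auto
    show "R M (Arr r s) i f i f" using x f ap_R[OF x(2) x(3)] by auto
  qed
  have P1: "gP1 M (Arr r s)" unfolding gP1_def
  proof (intro ballI impI)
    fix i i' f f' assume i: "i \<in> Idx M (Arr r s)" and i': "i' \<in> Idx M (Arr r s)" and le: "le M (Arr r s) i i'"
      and f: "f \<in> St M (Arr r s) i" and f': "f' \<in> St M (Arr r s) i'"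
    then obtain i1 j1 i1' j1' where x: "i = IArr i1 j1" "i1 \<in> Idx M r" "j1 \<in> Idx M s"
      "i' = IArr i1' j1'" "i1' \<in> Idx M r" "j1' \<in> Idx M s" by auto
    have l: "le M r i1 i1'" "le M s j1 j1'" using le x by auto
    have fx: "f \<in> St M (Arr r s) (IArr i1 j1)" "f' \<in> St M (Arr r s) (IArr i1' j1')" using f f' x by auto
    show "tri M (Arr r s) i' i f' f \<longleftrightarrow> R M (Arr r s) i f i' f'"
    proof
      assume t: "tri M (Arr r s) i' i f' f"
      show "R M (Arr r s) i f i' f'" unfolding x R.simps
      proof (intro ballI impI)
        fix a b assume a: "a \<in> St M r i1" and b: "b \<in> St M r i1'" and ab: "R M r i1 a i1' b"
        have "tri M r i1' i1 b a" using gP1_D[OF Gr x(2) x(5) l(1) a b] ab by blast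
        then have "tri M s j1' j1 (ap M f' b) (ap M f a)" using t x a b by auto
        then show "R M s j1 (ap M f a) j1' (ap M f' b)"
          using gP1_D[OF Gs x(3) x(6) l(2) ap_St[OF mo x(2,3) fx(1) a] ap_St[OF mo x(5,6) fx(2) b]] by blast
      qed
    next
      assume t: "R M (Arr r s) i f i' f'"
      show "tri M (Arr r s) i' i f' f" unfolding x tri.simps
      proof (intro ballI impI)
        fix a b assume b: "b \<in> St M r i1" and a: "a \<in> St M r i1'" and ab: "tri M r i1' i1 a b"
        have "R M r i1 b i1' a" using gP1_D[OF Gr x(2) x(5) l(1) b a] ab by blast
        then have "R M s j1 (ap M f b) j1' (ap M f' a)" using t x a b by auto
        then show "tri M s j1' j1 (ap M f' a) (ap M f b)"
          using gP1_D[OF Gs x(3) x(6) l(2) ap_St[OF mo x(2,3) fx(1) b] ap_St[OF mo x(5,6) fx(2) a]] by blast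
      qed
    qed
  qed
  have SR: "gSR M (Arr r s)" unfolding gSR_def
  proof (intro ballI impI)
    fix i f g assume i: "i \<in> Idx M (Arr r s)" and f: "f \<in> St M (Arr r s) i" and g: "g \<in> St M (Arr r s) i"
      and fg: "sim M (Arr r s) i f i g"
    then obtain i1 j1 where x: "i = IArr i1 j1" "i1 \<in> Idx M r" "j1 \<in> Idx M s" by auto
    obtain k c where k: "k \<in> Idx M (Arr r s)" "le M (Arr r s) i k" and c: "c \<in> St M (Arr r s) k"
      "tri M (Arr r s) k i c f" "tri M (Arr r s) k i c g"
      using fg unfolding sim_def by blast
    then obtain k1 k2 where y: "k = IArr k1 k2" "k1 \<in> Idx M r" "k2 \<in> Idx M s" by auto
    have l: "le M r i1 k1" "le M s j1 k2" using k x y by auto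
    have fx: "f \<in> St M (Arr r s) (IArr i1 j1)" "g \<in> St M (Arr r s) (IArr i1 j1)"
      "c \<in> St M (Arr r s) (IArr k1 k2)" using f g c x y by auto
    show "R M (Arr r s) i f i g" unfolding x R.simps
    proof (intro ballI impI)
      fix a b assume a: "a \<in> St M r i1" and b: "b \<in> St M r i1" and ab: "R M r i1 a i1 b"
      define z where "z = emb M r i1 k1 a"
      have z: "z \<in> St M r k1" unfolding z_def using gEmbSt_D[OF Gr x(2) y(2) l(1) a] .
      have az: "R M r i1 a k1 z" unfolding z_def
        using gE_D[OF Gr x(2) x(2) y(2) gLe_D[OF Gr x(2)] l(1) a a gRefl_D[OF Gr x(2) a]] .
      have bz: "R M r i1 b k1 z" unfolding z_def
        using gE_D[OF Gr x(2) x(2) y(2) gLe_D[OF Gr x(2)] l(1) b a R_sym[OF ab]] .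
      have t1: "tri M r k1 i1 z a" using gP1_D[OF Gr x(2) y(2) l(1) a z] az by blast
      have t2: "tri M r k1 i1 z b" using gP1_D[OF Gr x(2) y(2) l(1) b z] bz by blast
      have u1: "tri M s k2 j1 (ap M c z) (ap M f a)" using c(2) x y t1 z a by auto
      have u2: "tri M s k2 j1 (ap M c z) (ap M g b)" using c(3) x y t2 z b by auto
      have "sim M s j1 (ap M f a) j1 (ap M g b)" unfolding sim_def
        using y(3) l(2) ap_St[OF mo y(2,3) fx(3) z] u1 u2 by blast
      then show "R M s j1 (ap M f a) j1 (ap M g b)"
        using gSR_D[OF Gs x(3) ap_St[OF mo x(2,3) fx(1) a] ap_St[OF mo x(2,3) fx(2) b]] by blast
    qed
  qed
  have ES: "gEmbSt M (Arr r s)" unfolding gEmbSt_def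
  proof (intro ballI impI)
    fix i i' f assume i: "i \<in> Idx M (Arr r s)" and i': "i' \<in> Idx M (Arr r s)" and le: "le M (Arr r s) i i'"
      and f: "f \<in> St M (Arr r s) i"
    then obtain i1 j1 i1' j1' where x: "i = IArr i1 j1" "i1 \<in> Idx M r" "j1 \<in> Idx M s"
      "i' = IArr i1' j1'" "i1' \<in> Idx M r" "j1' \<in> Idx M s" by auto
    have l: "le M r i1 i1'" "le M s j1 j1'" using le x by auto
    show "emb M (Arr r s) i i' f \<in> St M (Arr r s) i'" using emb_Arr[OF x(2,3,5,6) l] f x by auto
  qed
  have PS: "gProjSt M (Arr r s)" unfolding gProjSt_def
  proof (intro ballI impI)
    fix i i' f assume i: "i \<in> Idx M (Arr r s)" and i': "i' \<in> Idx M (Arr r s)" and le: "le M (Arr r s) i i'"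
      and f: "f \<in> St M (Arr r s) i'"
    then obtain i1 j1 i1' j1' where x: "i = IArr i1 j1" "i1 \<in> Idx M r" "j1 \<in> Idx M s"
      "i' = IArr i1' j1'" "i1' \<in> Idx M r" "j1' \<in> Idx M s" by auto
    have l: "le M r i1 i1'" "le M s j1 j1'" using le x by auto
    show "proj M (Arr r s) i' i f \<in> St M (Arr r s) i" using proj_Arr[OF x(2,3,5,6) l] f x by auto
  qed
  have ER: "gEmR M (Arr r s)" unfolding gEmR_def
  proof (intro ballI impI)
    fix i i' f g assume i: "i \<in> Idx M (Arr r s)" and i': "i' \<in> Idx M (Arr r s)" and le: "le M (Arr r s) i i'"
      and f: "f \<in> St M (Arr r s) i" and g: "g \<in> St M (Arr r s) i" and fg: "R M (Arr r s) i f i g"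
    then obtain i1 j1 i1' j1' where x: "i = IArr i1 j1" "i1 \<in> Idx M r" "j1 \<in> Idx M s"
      "i' = IArr i1' j1'" "i1' \<in> Idx M r" "j1' \<in> Idx M s" by auto
    have l: "le M r i1 i1'" "le M s j1 j1'" using le x by auto
    have fx: "f \<in> St M (Arr r s) (IArr i1 j1)" "g \<in> St M (Arr r s) (IArr i1 j1)" using f g x by auto
    note ef = emb_Arr[OF x(2,3,5,6) l fx(1)] and eg = emb_Arr[OF x(2,3,5,6) l fx(2)]
    show "R M (Arr r s) i' (emb M (Arr r s) i i' f) i' (emb M (Arr r s) i i' g)" unfolding x R.simps
    proof (intro ballI impI)
      fix a b assume a: "a \<in> St M r i1'" and b: "b \<in> St M r i1'" and ab: "R M r i1' a i1' b"
      have pa: "proj M r i1' i1 a \<in> St M r i1" "proj M r i1' i1 b \<in> St M r i1"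
        using gProjSt_D[OF Gr x(2,5) l(1)] a b by auto
      have "R M r i1 (proj M r i1' i1 a) i1 (proj M r i1' i1 b)" using gPrR_D[OF Gr x(2,5) l(1) a b ab] .
      then have "R M s j1 (ap M f (proj M r i1' i1 a)) j1 (ap M g (proj M r i1' i1 b))"
        using fg x pa by auto
      then have "R M s j1' (emb M s j1 j1' (ap M f (proj M r i1' i1 a))) j1' (emb M s j1 j1' (ap M g (proj M r i1' i1 b)))"
        using gEmR_D[OF Gs x(3,6) l(2) ap_St[OF mo x(2,3) fx(1) pa(1)] ap_St[OF mo x(2,3) fx(2) pa(2)]] by blast
      then show "R M s j1' (ap M (emb M (Arr r s) (IArr i1 j1) (IArr i1' j1') f) a) j1'
          (ap M (emb M (Arr r s) (IArr i1 j1) (IArr i1' j1') g) b)" using ef eg a b by simp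
    qed
  qed
  have PR: "gPrR M (Arr r s)" unfolding gPrR_def
  proof (intro ballI impI)
    fix i i' f g assume i: "i \<in> Idx M (Arr r s)" and i': "i' \<in> Idx M (Arr r s)" and le: "le M (Arr r s) i i'"
      and f: "f \<in> St M (Arr r s) i'" and g: "g \<in> St M (Arr r s) i'" and fg: "R M (Arr r s) i' f i' g"
    then obtain i1 j1 i1' j1' where x: "i = IArr i1 j1" "i1 \<in> Idx M r" "j1 \<in> Idx M s"
      "i' = IArr i1' j1'" "i1' \<in> Idx M r" "j1' \<in> Idx M s" by auto
    have l: "le M r i1 i1'" "le M s j1 j1'" using le x by auto
    have fx: "f \<in> St M (Arr r s) (IArr i1' j1')" "g \<in> St M (Arr r s) (IArr i1' j1')" using f g x by auto
    note ef = proj_Arr[OF x(2,3,5,6) l fx(1)] and eg = proj_Arr[OF x(2,3,5,6) l fx(2)]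
    show "R M (Arr r s) i (proj M (Arr r s) i' i f) i (proj M (Arr r s) i' i g)" unfolding x R.simps
    proof (intro ballI impI)
      fix a b assume a: "a \<in> St M r i1" and b: "b \<in> St M r i1" and ab: "R M r i1 a i1 b"
      have pa: "emb M r i1 i1' a \<in> St M r i1'" "emb M r i1 i1' b \<in> St M r i1'"
        using gEmbSt_D[OF Gr x(2,5) l(1)] a b by auto
      have "R M r i1' (emb M r i1 i1' a) i1' (emb M r i1 i1' b)" using gEmR_D[OF Gr x(2,5) l(1) a b ab] .
      then have "R M s j1' (ap M f (emb M r i1 i1' a)) j1' (ap M g (emb M r i1 i1' b))"
        using fg x pa by auto
      then have "R M s j1 (proj M s j1' j1 (ap M f (emb M r i1 i1' a))) j1 (proj M s j1' j1 (ap M g (emb M r i1 i1' b)))"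
        using gPrR_D[OF Gs x(3,6) l(2) ap_St[OF mo x(5,6) fx(1) pa(1)] ap_St[OF mo x(5,6) fx(2) pa(2)]] by blast
      then show "R M s j1 (ap M (proj M (Arr r s) (IArr i1' j1') (IArr i1 j1) f) a) j1
          (ap M (proj M (Arr r s) (IArr i1' j1') (IArr i1 j1) g) b)" using ef eg a b by simp
    qed
  qed
  have E: "gE M (Arr r s)" unfolding gE_def
  proof (intro ballI impI)
    fix i i' i'' f f' assume i: "i \<in> Idx M (Arr r s)" and i': "i' \<in> Idx M (Arr r s)" and i'': "i'' \<in> Idx M (Arr r s)"
      and le1: "le M (Arr r s) i i'" and le2: "le M (Arr r s) i' i''"
      and f: "f \<in> St M (Arr r s) i" and f': "f' \<in> St M (Arr r s) i'" and ff: "R M (Arr r s) i f i' f'"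
    then obtain i1 j1 i1' j1' i1'' j1'' where x: "i = IArr i1 j1" "i1 \<in> Idx M r" "j1 \<in> Idx M s"
      "i' = IArr i1' j1'" "i1' \<in> Idx M r" "j1' \<in> Idx M s"
      "i'' = IArr i1'' j1''" "i1'' \<in> Idx M r" "j1'' \<in> Idx M s" by auto
    have l: "le M r i1 i1'" "le M s j1 j1'" "le M r i1' i1''" "le M s j1' j1''" using le1 le2 x by auto
    have fx: "f \<in> St M (Arr r s) (IArr i1 j1)" "f' \<in> St M (Arr r s) (IArr i1' j1')" using f f' x by auto
    note ef = emb_Arr[OF x(5,6,8,9) l(3,4) fx(2)]
    show "R M (Arr r s) i f i'' (emb M (Arr r s) i' i'' f')" unfolding x R.simps
    proof (intro ballI impI)
      fix a b assume a: "a \<in> St M r i1" and b: "b \<in> St M r i1''" and ab: "R M r i1 a i1'' b"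
      have pb: "proj M r i1'' i1' b \<in> St M r i1'" using gProjSt_D[OF Gr x(5,8) l(3) b] .
      have "R M r i1 a i1' (proj M r i1'' i1' b)" using gPr_D[OF Gr x(2,5,8) l(1,3) a b ab] .
      then have "R M s j1 (ap M f a) j1' (ap M f' (proj M r i1'' i1' b))" using ff x a pb by auto
      then have "R M s j1 (ap M f a) j1'' (emb M s j1' j1'' (ap M f' (proj M r i1'' i1' b)))"
        using gE_D[OF Gs x(3,6,9) l(2,4) ap_St[OF mo x(2,3) fx(1) a] ap_St[OF mo x(5,6) fx(2) pb]] by blast
      then show "R M s j1 (ap M f a) j1'' (ap M (emb M (Arr r s) (IArr i1' j1') (IArr i1'' j1'') f') b)"
        using ef b by simp
    qed
  qed
  have Pr: "gPr M (Arr r s)" unfolding gPr_def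
  proof (intro ballI impI)
    fix i i' i'' f f' assume i: "i \<in> Idx M (Arr r s)" and i': "i' \<in> Idx M (Arr r s)" and i'': "i'' \<in> Idx M (Arr r s)"
      and le1: "le M (Arr r s) i i'" and le2: "le M (Arr r s) i' i''"
      and f: "f \<in> St M (Arr r s) i" and f': "f' \<in> St M (Arr r s) i''" and ff: "R M (Arr r s) i f i'' f'"
    then obtain i1 j1 i1' j1' i1'' j1'' where x: "i = IArr i1 j1" "i1 \<in> Idx M r" "j1 \<in> Idx M s"
      "i' = IArr i1' j1'" "i1' \<in> Idx M r" "j1' \<in> Idx M s"
      "i'' = IArr i1'' j1''" "i1'' \<in> Idx M r" "j1'' \<in> Idx M s" by auto
    have l: "le M r i1 i1'" "le M s j1 j1'" "le M r i1' i1''" "le M s j1' j1''" using le1 le2 x by auto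
    have fx: "f \<in> St M (Arr r s) (IArr i1 j1)" "f' \<in> St M (Arr r s) (IArr i1'' j1'')" using f f' x by auto
    note ef = proj_Arr[OF x(5,6,8,9) l(3,4) fx(2)]
    show "R M (Arr r s) i f i' (proj M (Arr r s) i'' i' f')" unfolding x R.simps
    proof (intro ballI impI)
      fix a b assume a: "a \<in> St M r i1" and b: "b \<in> St M r i1'" and ab: "R M r i1 a i1' b"
      have pb: "emb M r i1' i1'' b \<in> St M r i1''" using gEmbSt_D[OF Gr x(5,8) l(3) b] .
      have "R M r i1 a i1'' (emb M r i1' i1'' b)" using gE_D[OF Gr x(2,5,8) l(1,3) a b ab] .
      then have "R M s j1 (ap M f a) j1'' (ap M f' (emb M r i1' i1'' b))" using ff x a pb by auto
      then have "R M s j1 (ap M f a) j1' (proj M s j1'' j1' (ap M f' (emb M r i1' i1'' b)))"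
        using gPr_D[OF Gs x(3,6,9) l(2,4) ap_St[OF mo x(2,3) fx(1) a] ap_St[OF mo x(8,9) fx(2) pb]] by blast
      then show "R M s j1 (ap M f a) j1' (ap M (proj M (Arr r s) (IArr i1'' j1'') (IArr i1' j1') f') b)"
        using ef b by simp
    qed
  qed
  have Pos: "gPos M (Arr r s)" unfolding gPos_def
  proof (intro impI ballI)
    fix c1 j1 c2 j2 f1 f2 assume ps: "pos (Arr r s)" and c1: "c1 \<in> Idx M (Arr r s)" and j1: "j1 \<in> Idx M (Arr r s)"
      and c2: "c2 \<in> Idx M (Arr r s)" and j2: "j2 \<in> Idx M (Arr r s)"
      and l1: "le M (Arr r s) c1 j1" and l2: "le M (Arr r s) c2 j2"
      and f1: "f1 \<in> St M (Arr r s) c1" and f2: "f2 \<in> St M (Arr r s) c2" and ff: "R M (Arr r s) c1 f1 c2 f2"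
    then obtain u1 v1 p1 q1 u2 v2 p2 q2 where x: "c1 = IArr u1 v1" "u1 \<in> Idx M r" "v1 \<in> Idx M s"
      "j1 = IArr p1 q1" "p1 \<in> Idx M r" "q1 \<in> Idx M s"
      "c2 = IArr u2 v2" "u2 \<in> Idx M r" "v2 \<in> Idx M s"
      "j2 = IArr p2 q2" "p2 \<in> Idx M r" "q2 \<in> Idx M s" by auto
    have l: "le M r u1 p1" "le M s v1 q1" "le M r u2 p2" "le M s v2 q2" using l1 l2 x by auto
    have nr: "neg r" and ps2: "pos s" using ps by auto
    have fx: "f1 \<in> St M (Arr r s) (IArr u1 v1)" "f2 \<in> St M (Arr r s) (IArr u2 v2)" using f1 f2 x by auto
    note e1 = emb_Arr[OF x(2,3,5,6) l(1,2) fx(1)] and e2 = emb_Arr[OF x(8,9,11,12) l(3,4) fx(2)]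
    show "R M (Arr r s) j1 (emb M (Arr r s) c1 j1 f1) j2 (emb M (Arr r s) c2 j2 f2)" unfolding x R.simps
    proof (intro ballI impI)
      fix a b assume a: "a \<in> St M r p1" and b: "b \<in> St M r p2" and ab: "R M r p1 a p2 b"
      have pa: "proj M r p1 u1 a \<in> St M r u1" "proj M r p2 u2 b \<in> St M r u2"
        using gProjSt_D[OF Gr x(2,5) l(1) a] gProjSt_D[OF Gr x(8,11) l(3) b] by auto
      have "R M r u1 (proj M r p1 u1 a) u2 (proj M r p2 u2 b)"
        using gNeg_D[OF Gr nr x(5,2,11,8) l(1,3) a b ab] .
      then have "R M s v1 (ap M f1 (proj M r p1 u1 a)) v2 (ap M f2 (proj M r p2 u2 b))" using ff x pa by auto
      then have "R M s q1 (emb M s v1 q1 (ap M f1 (proj M r p1 u1 a))) q2 (emb M s v2 q2 (ap M f2 (proj M r p2 u2 b)))"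
        using gPos_D[OF Gs ps2 x(3,6,9,12) l(2,4) ap_St[OF mo x(2,3) fx(1) pa(1)] ap_St[OF mo x(8,9) fx(2) pa(2)]] by blast
      then show "R M s q1 (ap M (emb M (Arr r s) (IArr u1 v1) (IArr p1 q1) f1) a) q2
          (ap M (emb M (Arr r s) (IArr u2 v2) (IArr p2 q2) f2) b)" using e1 e2 a b by simp
    qed
  qed
  have Neg: "gNeg M (Arr r s)" unfolding gNeg_def
  proof (intro impI ballI)
    fix c1 j1 c2 j2 f1 f2 assume ps: "neg (Arr r s)" and c1: "c1 \<in> Idx M (Arr r s)" and j1: "j1 \<in> Idx M (Arr r s)"
      and c2: "c2 \<in> Idx M (Arr r s)" and j2: "j2 \<in> Idx M (Arr r s)"
      and l1: "le M (Arr r s) j1 c1" and l2: "le M (Arr r s) j2 c2"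
      and f1: "f1 \<in> St M (Arr r s) c1" and f2: "f2 \<in> St M (Arr r s) c2" and ff: "R M (Arr r s) c1 f1 c2 f2"
    then obtain u1 v1 p1 q1 u2 v2 p2 q2 where x: "c1 = IArr u1 v1" "u1 \<in> Idx M r" "v1 \<in> Idx M s"
      "j1 = IArr p1 q1" "p1 \<in> Idx M r" "q1 \<in> Idx M s"
      "c2 = IArr u2 v2" "u2 \<in> Idx M r" "v2 \<in> Idx M s"
      "j2 = IArr p2 q2" "p2 \<in> Idx M r" "q2 \<in> Idx M s" by auto
    have l: "le M r p1 u1" "le M s q1 v1" "le M r p2 u2" "le M s q2 v2" using l1 l2 x by auto
    have nr: "pos r" and ps2: "neg s" using ps by auto
    have fx: "f1 \<in> St M (Arr r s) (IArr u1 v1)" "f2 \<in> St M (Arr r s) (IArr u2 v2)" using f1 f2 x by auto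
    note e1 = proj_Arr[OF x(5,6,2,3) l(1,2) fx(1)] and e2 = proj_Arr[OF x(11,12,8,9) l(3,4) fx(2)]
    show "R M (Arr r s) j1 (proj M (Arr r s) c1 j1 f1) j2 (proj M (Arr r s) c2 j2 f2)" unfolding x R.simps
    proof (intro ballI impI)
      fix a b assume a: "a \<in> St M r p1" and b: "b \<in> St M r p2" and ab: "R M r p1 a p2 b"
      have pa: "emb M r p1 u1 a \<in> St M r u1" "emb M r p2 u2 b \<in> St M r u2"
        using gEmbSt_D[OF Gr x(5,2) l(1) a] gEmbSt_D[OF Gr x(11,8) l(3) b] by auto
      have "R M r u1 (emb M r p1 u1 a) u2 (emb M r p2 u2 b)"
        using gPos_D[OF Gr nr x(5,2,11,8) l(1,3) a b ab] .
      then have "R M s v1 (ap M f1 (emb M r p1 u1 a)) v2 (ap M f2 (emb M r p2 u2 b))" using ff x pa by auto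
      then have "R M s q1 (proj M s v1 q1 (ap M f1 (emb M r p1 u1 a))) q2 (proj M s v2 q2 (ap M f2 (emb M r p2 u2 b)))"
        using gNeg_D[OF Gs ps2 x(3,6,9,12) l(2,4) ap_St[OF mo x(2,3) fx(1) pa(1)] ap_St[OF mo x(8,9) fx(2) pa(2)]] by blast
      then show "R M s q1 (ap M (proj M (Arr r s) (IArr u1 v1) (IArr p1 q1) f1) a) q2
          (ap M (proj M (Arr r s) (IArr u2 v2) (IArr p2 q2) f2) b)" using e1 e2 a b by simp
    qed
  qed
  have PN: "gPN M (Arr r s)" unfolding gPN_def
  proof (intro impI ballI)
    fix c1 j1 c2 j2 f1 f2 assume ps: "pos (Arr r s) \<and> neg (Arr r s)" and c1: "c1 \<in> Idx M (Arr r s)" and j1: "j1 \<in> Idx M (Arr r s)"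
      and c2: "c2 \<in> Idx M (Arr r s)" and j2: "j2 \<in> Idx M (Arr r s)"
      and l1: "le M (Arr r s) c1 j1" and l2: "le M (Arr r s) j2 c2"
      and f1: "f1 \<in> St M (Arr r s) c1" and f2: "f2 \<in> St M (Arr r s) c2" and ff: "R M (Arr r s) c1 f1 c2 f2"
    then obtain u1 v1 p1 q1 u2 v2 p2 q2 where x: "c1 = IArr u1 v1" "u1 \<in> Idx M r" "v1 \<in> Idx M s"
      "j1 = IArr p1 q1" "p1 \<in> Idx M r" "q1 \<in> Idx M s"
      "c2 = IArr u2 v2" "u2 \<in> Idx M r" "v2 \<in> Idx M s"
      "j2 = IArr p2 q2" "p2 \<in> Idx M r" "q2 \<in> Idx M s" by auto
    have l: "le M r u1 p1" "le M s v1 q1" "le M r p2 u2" "le M s q2 v2" using l1 l2 x by auto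
    have pr: "pos r" "neg r" and ps2: "pos s" "neg s" using ps by auto
    have fx: "f1 \<in> St M (Arr r s) (IArr u1 v1)" "f2 \<in> St M (Arr r s) (IArr u2 v2)" using f1 f2 x by auto
    note e1 = emb_Arr[OF x(2,3,5,6) l(1,2) fx(1)] and e2 = proj_Arr[OF x(11,12,8,9) l(3,4) fx(2)]
    show "R M (Arr r s) j1 (emb M (Arr r s) c1 j1 f1) j2 (proj M (Arr r s) c2 j2 f2)" unfolding x R.simps
    proof (intro ballI impI)
      fix a b assume a: "a \<in> St M r p1" and b: "b \<in> St M r p2" and ab: "R M r p1 a p2 b"
      have pa: "proj M r p1 u1 a \<in> St M r u1" "emb M r p2 u2 b \<in> St M r u2"
        using gProjSt_D[OF Gr x(2,5) l(1) a] gEmbSt_D[OF Gr x(11,8) l(3) b] by auto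
      have "R M r u2 (emb M r p2 u2 b) u1 (proj M r p1 u1 a)"
        using gPN_D[OF Gr pr x(11,8,5,2) l(3,1) b a R_sym[OF ab]] .
      then have "R M r u1 (proj M r p1 u1 a) u2 (emb M r p2 u2 b)" by (rule R_sym)
      then have "R M s v1 (ap M f1 (proj M r p1 u1 a)) v2 (ap M f2 (emb M r p2 u2 b))" using ff x pa by auto
      then have "R M s q1 (emb M s v1 q1 (ap M f1 (proj M r p1 u1 a))) q2 (proj M s v2 q2 (ap M f2 (emb M r p2 u2 b)))"
        using gPN_D[OF Gs ps2 x(3,6,9,12) l(2,4) ap_St[OF mo x(2,3) fx(1) pa(1)] ap_St[OF mo x(8,9) fx(2) pa(2)]] by blast
      then show "R M s q1 (ap M (emb M (Arr r s) (IArr u1 v1) (IArr p1 q1) f1) a) q2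
          (ap M (proj M (Arr r s) (IArr u2 v2) (IArr p2 q2) f2) b)" using e1 e2 a b by simp
    qed
  qed
  show ?thesis unfolding good_def using Le Refl P1 SR ES PS ER PR E Pr Pos Neg PN by blast
qed

end

lemma good_all: "model_ok M \<Longrightarrow> good M \<rho>"
proof (induction \<rho>)
  case Prop then show ?case using good_Prop by blast
next
  case (Base x) then show ?case by (rule good_Base)
next
  case (Arr r s) then show ?case using good_Arr by blast
qed


section \<open>Fundamental lemma\<close>

inductive_cases sval_VarE: "sval M \<Gamma> C (Var k) \<rho> j F"
inductive_cases sval_AppE: "sval M \<Gamma> C (App r s) \<rho> j F"
inductive_cases sval_LamE: "sval M \<Gamma> C (Lam n \<tau> r) \<rho> j F"

lemma sval_Idx: "sval M \<Gamma> C t \<rho> i F \<Longrightarrow> i \<in> Idx M \<rho>"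
  by (induction rule: sval.induct) auto

lemma sval_ty: "sval M \<Gamma> C1 t \<rho>1 i1 F1 \<Longrightarrow> sval M \<Gamma> C2 t \<rho>2 i2 F2 \<Longrightarrow> \<rho>1 = \<rho>2"
proof (induction arbitrary: C2 \<rho>2 i2 F2 rule: sval.induct)
  case (sVarPos k \<Gamma> j C)
  then show ?case by (auto elim: sval_VarE)
next
  case (sVarNeg k \<Gamma> j C)
  then show ?case by (auto elim: sval_VarE)
next
  case (sApp \<Gamma> C r \<rho> \<sigma> i j F s G)
  from sApp.prems show ?case
    by (rule sval_AppE) (use sApp.IH(1) in fastforce)
next
  case (sLam i \<rho> \<Gamma> C r \<sigma> j F)
  from sLam.prems show ?case
    by (rule sval_LamE) (use sLam.IH in fastforce)
qed

lemma ctx_ext: "length C = length \<Gamma> \<Longrightarrow> as \<in> ctx_states M \<Gamma> C \<Longrightarrow> b \<in> St M \<tau> i \<Longrightarrow> as @ [b] \<in> ctx_states M (\<Gamma> @ [\<tau>]) (C @ [i])"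
  unfolding ctx_states_def by (auto simp: nth_append less_Suc_eq)

lemma ctx_len: "as \<in> ctx_states M \<Gamma> C \<Longrightarrow> length as = length \<Gamma>"
  unfolding ctx_states_def by auto

lemma ctx_nth: "as \<in> ctx_states M \<Gamma> C \<Longrightarrow> k < length \<Gamma> \<Longrightarrow> as ! k \<in> St M (\<Gamma> ! k) (C ! k)"
  unfolding ctx_states_def by auto

lemma idx_ext: "length C = length \<Gamma> \<Longrightarrow> \<forall>k<length \<Gamma>. C ! k \<in> Idx M (\<Gamma> ! k) \<Longrightarrow> i \<in> Idx M \<tau> \<Longrightarrow>
   \<forall>k<length (\<Gamma> @ [\<tau>]). (C @ [i]) ! k \<in> Idx M ((\<Gamma> @ [\<tau>]) ! k)"
  by (auto simp: nth_append less_Suc_eq)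

lemma R_ext: "length C1 = length \<Gamma> \<Longrightarrow> length C2 = length \<Gamma> \<Longrightarrow> length as1 = length \<Gamma> \<Longrightarrow> length as2 = length \<Gamma> \<Longrightarrow>
   \<forall>k<length \<Gamma>. R M (\<Gamma> ! k) (C1 ! k) (as1 ! k) (C2 ! k) (as2 ! k) \<Longrightarrow> R M \<tau> i1 b1 i2 b2 \<Longrightarrow>
   \<forall>k<length (\<Gamma> @ [\<tau>]). R M ((\<Gamma> @ [\<tau>]) ! k) ((C1 @ [i1]) ! k) ((as1 @ [b1]) ! k) ((C2 @ [i2]) ! k) ((as2 @ [b2]) ! k)"
  by (auto simp: nth_append less_Suc_eq)

lemma FL:
  assumes mo: "model_ok M"
  shows "sval M \<Gamma> C1 t \<rho> i1 F1 \<Longrightarrow> sval M \<Gamma> C2 t \<rho> i2 F2 \<Longrightarrow> length C1 = length \<Gamma> \<Longrightarrow> length C2 = length \<Gamma> \<Longrightarrow>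
    \<forall>k<length \<Gamma>. C1 ! k \<in> Idx M (\<Gamma> ! k) \<Longrightarrow> \<forall>k<length \<Gamma>. C2 ! k \<in> Idx M (\<Gamma> ! k) \<Longrightarrow>
    as1 \<in> ctx_states M \<Gamma> C1 \<Longrightarrow> as2 \<in> ctx_states M \<Gamma> C2 \<Longrightarrow>
    \<forall>k<length \<Gamma>. R M (\<Gamma> ! k) (C1 ! k) (as1 ! k) (C2 ! k) (as2 ! k) \<Longrightarrow>
    F1 as1 \<in> St M \<rho> i1 \<and> F2 as2 \<in> St M \<rho> i2 \<and> R M \<rho> i1 (F1 as1) i2 (F2 as2)"
proof (induction t arbitrary: \<Gamma> C1 C2 \<rho> i1 i2 F1 F2 as1 as2)
  case (Var k)
  note G = good_all[OF mo]
  from Var.prems(1) show ?case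
  proof (rule sval_VarE)
    assume k: "k < length \<Gamma>" and r: "\<rho> = \<Gamma> ! k" and F1: "F1 = (\<lambda>as. emb M (\<Gamma> ! k) (C1 ! k) i1 (as ! k))"
      and p1: "pos (\<Gamma> ! k)" and i1: "i1 \<in> Idx M (\<Gamma> ! k)" and l1: "le M (\<Gamma> ! k) (C1 ! k) i1"
    have c1: "C1 ! k \<in> Idx M (\<Gamma> ! k)" "C2 ! k \<in> Idx M (\<Gamma> ! k)" using Var.prems k by auto
    have a: "as1 ! k \<in> St M (\<Gamma> ! k) (C1 ! k)" "as2 ! k \<in> St M (\<Gamma> ! k) (C2 ! k)"
      using ctx_nth[OF Var.prems(7) k] ctx_nth[OF Var.prems(8) k] by auto
    have aR: "R M (\<Gamma> ! k) (C1 ! k) (as1 ! k) (C2 ! k) (as2 ! k)" using Var.prems(9) k by auto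
    have e1: "F1 as1 \<in> St M \<rho> i1" using F1 r gEmbSt_D[OF G c1(1) i1 l1 a(1)] by simp
    from Var.prems(2) show ?thesis
    proof (rule sval_VarE)
      assume F2: "F2 = (\<lambda>as. emb M (\<Gamma> ! k) (C2 ! k) i2 (as ! k))"
        and i2: "i2 \<in> Idx M (\<Gamma> ! k)" and l2: "le M (\<Gamma> ! k) (C2 ! k) i2"
      show ?thesis using e1 F1 F2 r gEmbSt_D[OF G c1(2) i2 l2 a(2)]
          gPos_D[OF G p1 c1(1) i1 c1(2) i2 l1 l2 a aR] by simp
    next
      assume F2: "F2 = (\<lambda>as. proj M (\<Gamma> ! k) (C2 ! k) i2 (as ! k))" and n2: "neg (\<Gamma> ! k)"
        and i2: "i2 \<in> Idx M (\<Gamma> ! k)" and l2: "le M (\<Gamma> ! k) i2 (C2 ! k)"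
      show ?thesis using e1 F1 F2 r gProjSt_D[OF G i2 c1(2) l2 a(2)]
          gPN_D[OF G p1 n2 c1(1) i1 c1(2) i2 l1 l2 a aR] by simp
    qed
  next
    assume k: "k < length \<Gamma>" and r: "\<rho> = \<Gamma> ! k" and F1: "F1 = (\<lambda>as. proj M (\<Gamma> ! k) (C1 ! k) i1 (as ! k))"
      and n1: "neg (\<Gamma> ! k)" and i1: "i1 \<in> Idx M (\<Gamma> ! k)" and l1: "le M (\<Gamma> ! k) i1 (C1 ! k)"
    have c1: "C1 ! k \<in> Idx M (\<Gamma> ! k)" "C2 ! k \<in> Idx M (\<Gamma> ! k)" using Var.prems k by auto
    have a: "as1 ! k \<in> St M (\<Gamma> ! k) (C1 ! k)" "as2 ! k \<in> St M (\<Gamma> ! k) (C2 ! k)"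
      using ctx_nth[OF Var.prems(7) k] ctx_nth[OF Var.prems(8) k] by auto
    have aR: "R M (\<Gamma> ! k) (C1 ! k) (as1 ! k) (C2 ! k) (as2 ! k)" using Var.prems(9) k by auto
    have e1: "F1 as1 \<in> St M \<rho> i1" using F1 r gProjSt_D[OF G i1 c1(1) l1 a(1)] by simp
    from Var.prems(2) show ?thesis
    proof (rule sval_VarE)
      assume F2: "F2 = (\<lambda>as. emb M (\<Gamma> ! k) (C2 ! k) i2 (as ! k))" and p2: "pos (\<Gamma> ! k)"
        and i2: "i2 \<in> Idx M (\<Gamma> ! k)" and l2: "le M (\<Gamma> ! k) (C2 ! k) i2"
      show ?thesis using e1 F1 F2 r gEmbSt_D[OF G c1(2) i2 l2 a(2)]
          R_sym[OF gPN_D[OF G p2 n1 c1(2) i2 c1(1) i1 l2 l1 a(2) a(1) R_sym[OF aR]]] by simp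
    next
      assume F2: "F2 = (\<lambda>as. proj M (\<Gamma> ! k) (C2 ! k) i2 (as ! k))"
        and i2: "i2 \<in> Idx M (\<Gamma> ! k)" and l2: "le M (\<Gamma> ! k) i2 (C2 ! k)"
      show ?thesis using e1 F1 F2 r gProjSt_D[OF G i2 c1(2) l2 a(2)]
          gNeg_D[OF G n1 c1(1) i1 c1(2) i2 l1 l2 a aR] by simp
    qed
  qed
next
  case (App t1 t2)
  from App.prems(1) show ?case
  proof (rule sval_AppE)
    fix \<rho>a ia Fa Ga
    assume F1: "F1 = (\<lambda>as. ap M (Fa as) (Ga as))" and da: "sval M \<Gamma> C1 t1 (Arr \<rho>a \<rho>) (IArr ia i1) Fa"
      and ga: "sval M \<Gamma> C1 t2 \<rho>a ia Ga"
    from App.prems(2) show ?thesis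
    proof (rule sval_AppE)
      fix \<rho>b ib Fb Gb
      assume F2: "F2 = (\<lambda>as. ap M (Fb as) (Gb as))" and db: "sval M \<Gamma> C2 t1 (Arr \<rho>b \<rho>) (IArr ib i2) Fb"
        and gb: "sval M \<Gamma> C2 t2 \<rho>b ib Gb"
      have eq: "\<rho>b = \<rho>a" using sval_ty[OF da db] by simp
      note I1 = App.IH(1)[OF da db[unfolded eq] App.prems(3-9)]
      note I2 = App.IH(2)[OF ga gb[unfolded eq] App.prems(3-9)]
      have ix: "ia \<in> Idx M \<rho>a" "i1 \<in> Idx M \<rho>" "ib \<in> Idx M \<rho>a" "i2 \<in> Idx M \<rho>"
        using sval_Idx[OF da] sval_Idx[OF db] eq by auto
      show ?thesis using I1 I2 F1 F2 ap_St[OF mo ix(1,2)] ap_St[OF mo ix(3,4)] eq by auto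
    qed
  qed
next
  case (Lam n \<tau> t)
  note G = good_all[OF mo]
  from Lam.prems(1) show ?case
  proof (rule sval_LamE)
    fix \<sigma> ia j1 Fb1
    assume n: "n = length \<Gamma>" and r: "\<rho> = Arr \<tau> \<sigma>" and i1: "i1 = IArr ia j1" and ia: "ia \<in> Idx M \<tau>"
      and d1: "sval M (\<Gamma> @ [\<tau>]) (C1 @ [ia]) t \<sigma> j1 Fb1"
      and F1: "F1 = (\<lambda>as. THE v. v \<in> St M (Arr \<tau> \<sigma>) (IArr ia j1) \<and> (\<forall>b\<in>St M \<tau> ia. ap M v b = Fb1 (as @ [b])))"
    from Lam.prems(2) show ?thesis
    proof (rule sval_LamE)
      fix \<sigma>' ib j2 Fb2
      assume r2: "\<rho> = Arr \<tau> \<sigma>'" and i2: "i2 = IArr ib j2" and ib: "ib \<in> Idx M \<tau>"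
        and d2': "sval M (\<Gamma> @ [\<tau>]) (C2 @ [ib]) t \<sigma>' j2 Fb2"
        and F2: "F2 = (\<lambda>as. THE v. v \<in> St M (Arr \<tau> \<sigma>') (IArr ib j2) \<and> (\<forall>b\<in>St M \<tau> ib. ap M v b = Fb2 (as @ [b])))"
      have s': "\<sigma>' = \<sigma>" using r r2 by simp
      note d2 = d2'[unfolded s']
      have j: "j1 \<in> Idx M \<sigma>" "j2 \<in> Idx M \<sigma>" using sval_Idx[OF d1] sval_Idx[OF d2] .
      have len: "length C1 = length \<Gamma>" "length C2 = length \<Gamma>" "length as1 = length \<Gamma>" "length as2 = length \<Gamma>"
        using Lam.prems(3,4) ctx_len[OF Lam.prems(7)] ctx_len[OF Lam.prems(8)] by auto
      have len': "length (C1 @ [ia]) = length (\<Gamma> @ [\<tau>])" "length (C2 @ [ib]) = length (\<Gamma> @ [\<tau>])"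
        using len by auto
      have idx1: "\<forall>k<length (\<Gamma> @ [\<tau>]). (C1 @ [ia]) ! k \<in> Idx M ((\<Gamma> @ [\<tau>]) ! k)"
        using idx_ext[OF len(1) Lam.prems(5) ia] .
      have idx2: "\<forall>k<length (\<Gamma> @ [\<tau>]). (C2 @ [ib]) ! k \<in> Idx M ((\<Gamma> @ [\<tau>]) ! k)"
        using idx_ext[OF len(2) Lam.prems(6) ib] .
      have refl1: "\<forall>k<length \<Gamma>. R M (\<Gamma> ! k) (C1 ! k) (as1 ! k) (C1 ! k) (as1 ! k)"
        using gRefl_D[OF G] Lam.prems(5) ctx_nth[OF Lam.prems(7)] by blast
      have refl2: "\<forall>k<length \<Gamma>. R M (\<Gamma> ! k) (C2 ! k) (as2 ! k) (C2 ! k) (as2 ! k)"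
        using gRefl_D[OF G] Lam.prems(6) ctx_nth[OF Lam.prems(8)] by blast
      have side1: "(THE v. v \<in> St M (Arr \<tau> \<sigma>) (IArr ia j1) \<and> (\<forall>b\<in>St M \<tau> ia. ap M v b = Fb1 (as1 @ [b])))
          \<in> St M (Arr \<tau> \<sigma>) (IArr ia j1) \<and> (\<forall>b\<in>St M \<tau> ia.
          ap M (THE v. v \<in> St M (Arr \<tau> \<sigma>) (IArr ia j1) \<and> (\<forall>b\<in>St M \<tau> ia. ap M v b = Fb1 (as1 @ [b]))) b = Fb1 (as1 @ [b]))"
      proof (rule THE_St[OF mo ia j(1)])
        fix b assume b: "b \<in> St M \<tau> ia"
        show "Fb1 (as1 @ [b]) \<in> St M \<sigma> j1"
          using Lam.IH[OF d1 d1 len'(1) len'(1) idx1 idx1 ctx_ext[OF len(1) Lam.prems(7) b] ctx_ext[OF len(1) Lam.prems(7) b]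
              R_ext[OF len(1) len(1) len(3) len(3) refl1 gRefl_D[OF G ia b]]] by blast
      next
        fix b b' assume b: "b \<in> St M \<tau> ia" and b': "b' \<in> St M \<tau> ia" and bb: "sim M \<tau> ia b ia b'"
        have "R M \<tau> ia b ia b'" using gSR_D[OF G ia b b' bb] .
        then have "Fb1 (as1 @ [b]) \<in> St M \<sigma> j1 \<and> Fb1 (as1 @ [b']) \<in> St M \<sigma> j1 \<and> R M \<sigma> j1 (Fb1 (as1 @ [b])) j1 (Fb1 (as1 @ [b']))"
          using Lam.IH[OF d1 d1 len'(1) len'(1) idx1 idx1 ctx_ext[OF len(1) Lam.prems(7) b] ctx_ext[OF len(1) Lam.prems(7) b']
              R_ext[OF len(1) len(1) len(3) len(3) refl1]] by blast
        then show "sim M \<sigma> j1 (Fb1 (as1 @ [b])) j1 (Fb1 (as1 @ [b']))" using gRS_D[OF G j(1)] by blast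
      qed
      have side2: "(THE v. v \<in> St M (Arr \<tau> \<sigma>) (IArr ib j2) \<and> (\<forall>b\<in>St M \<tau> ib. ap M v b = Fb2 (as2 @ [b])))
          \<in> St M (Arr \<tau> \<sigma>) (IArr ib j2) \<and> (\<forall>b\<in>St M \<tau> ib.
          ap M (THE v. v \<in> St M (Arr \<tau> \<sigma>) (IArr ib j2) \<and> (\<forall>b\<in>St M \<tau> ib. ap M v b = Fb2 (as2 @ [b]))) b = Fb2 (as2 @ [b]))"
      proof (rule THE_St[OF mo ib j(2)])
        fix b assume b: "b \<in> St M \<tau> ib"
        show "Fb2 (as2 @ [b]) \<in> St M \<sigma> j2"
          using Lam.IH[OF d2 d2 len'(2) len'(2) idx2 idx2 ctx_ext[OF len(2) Lam.prems(8) b] ctx_ext[OF len(2) Lam.prems(8) b]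
              R_ext[OF len(2) len(2) len(4) len(4) refl2 gRefl_D[OF G ib b]]] by blast
      next
        fix b b' assume b: "b \<in> St M \<tau> ib" and b': "b' \<in> St M \<tau> ib" and bb: "sim M \<tau> ib b ib b'"
        have "R M \<tau> ib b ib b'" using gSR_D[OF G ib b b' bb] .
        then have "Fb2 (as2 @ [b]) \<in> St M \<sigma> j2 \<and> Fb2 (as2 @ [b']) \<in> St M \<sigma> j2 \<and> R M \<sigma> j2 (Fb2 (as2 @ [b])) j2 (Fb2 (as2 @ [b']))"
          using Lam.IH[OF d2 d2 len'(2) len'(2) idx2 idx2 ctx_ext[OF len(2) Lam.prems(8) b] ctx_ext[OF len(2) Lam.prems(8) b']
              R_ext[OF len(2) len(2) len(4) len(4) refl2]] by blast
        then show "sim M \<sigma> j2 (Fb2 (as2 @ [b])) j2 (Fb2 (as2 @ [b']))" using gRS_D[OF G j(2)] by blast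
      qed
      have RR: "R M (Arr \<tau> \<sigma>) (IArr ia j1) (F1 as1) (IArr ib j2) (F2 as2)"
        unfolding R.simps
      proof (intro ballI impI)
        fix b b' assume b: "b \<in> St M \<tau> ia" and b': "b' \<in> St M \<tau> ib" and bb: "R M \<tau> ia b ib b'"
        have "R M \<sigma> j1 (Fb1 (as1 @ [b])) j2 (Fb2 (as2 @ [b']))"
          using Lam.IH[OF d1 d2 len'(1) len'(2) idx1 idx2 ctx_ext[OF len(1) Lam.prems(7) b] ctx_ext[OF len(2) Lam.prems(8) b']
              R_ext[OF len Lam.prems(9) bb]] by blast
        then show "R M \<sigma> j1 (ap M (F1 as1) b) j2 (ap M (F2 as2) b')"
          using side1 side2 b b' F1 F2 s' by simp
      qed
      show ?thesis using side1 side2 RR F1 F2 s' r i1 i2 by simp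
    qed
  qed
qed


theorem corollary3p10:
  fixes M :: "('bt, 'ix, 'v) model"
  assumes "model_ok M"
    and "\<forall>k<length \<Gamma>. pos (\<Gamma> ! k) \<or> neg (\<Gamma> ! k)"
    and "typed \<Gamma> r \<rho>"
    and "length C = length \<Gamma>" and "\<forall>k<length \<Gamma>. C ! k \<in> Idx M (\<Gamma> ! k)"
    and "i \<in> Idx M \<rho>" and "i' \<in> Idx M \<rho>" and "le M \<rho> i i'"
    and "sval M \<Gamma> C r \<rho> i F" and "sval M \<Gamma> C r \<rho> i' F'"
    and "as \<in> ctx_states M \<Gamma> C"
  shows "tri M \<rho> i' i (F' as) (F as)"
proof -
  note G = good_all[OF assms(1)]
  have refl: "\<forall>k<length \<Gamma>. R M (\<Gamma> ! k) (C ! k) (as ! k) (C ! k) (as ! k)"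
    using gRefl_D[OF G] assms(5) ctx_nth[OF assms(11)] by blast
  have "F as \<in> St M \<rho> i \<and> F' as \<in> St M \<rho> i' \<and> R M \<rho> i (F as) i' (F' as)"
    using FL[OF assms(1) assms(9) assms(10) assms(4) assms(4) assms(5) assms(5) assms(11) assms(11) refl] .
  then show ?thesis using gP1_D[OF G assms(6,7,8)] by blast
qed

end
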